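(* Let $\nu$ be a Borel probability measure on $\mathbb{R}$ with support $\Omega\subseteq[0,1]$ which is an R-spectral measure, and let $q\ge1$ be an integer such that $q\mathcal{Z}_\nu\subseteq\mathbb{Z}$, where $\mathcal{Z}_\nu=\{\xi\in\mathbb{R}:\widehat\nu(\xi)=0\}$. Let $\mathcal{C}$ be a finite set of nonnegative integers, $P=\{p_c\}_{c\in\mathcal{C}}$ with $p_c>0$, $\sum_cp_c=1$, let $\eta=\sum_{c\in\mathcal{C}}p_c\delta_c$ and $\eta_q=\sum_{c\in\mathcal{C}}p_c\delta_{qc}$. Then $\mu=\eta_q*\nu$ is a spectral measure if and only if both $\eta$ and $\nu$ are spectral measures.
   Context: $\widehat\nu(\xi)=\int e^{2\pi i\xi x}d\nu(x)$. A probability measure $\rho$ is a spectral measure if $\{e^{2\pi i\lambda x}:\lambda\in\Lambda\}$ is an orthonormal basis of $L^2(\rho)$ for some countable $\Lambda$; it is an R-spectral measure if such a family is a Riesz basis (a basis that is also a frame) of $L^2(\rho)$. $*$ denotes convolution. *)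

theory Defs
  imports "HOL-Probability.Probability"
begin

definition expo :: "real \<Rightarrow> real \<Rightarrow> complex" where
  "expo l x = cis (2 * pi * l * x)"

definition fourier_measure :: "real measure \<Rightarrow> real \<Rightarrow> complex" where
  "fourier_measure \<nu> \<xi> = (\<integral>x. expo \<xi> x \<partial>\<nu>)"

definition zero_set :: "real measure \<Rightarrow> real set" where
  "zero_set \<nu> = {\<xi>. fourier_measure \<nu> \<xi> = 0}"

definition measure_support :: "real measure \<Rightarrow> real set" where
  "measure_support \<nu> = {x. \<forall>e>0. emeasure \<nu> (ball x e) > 0}"

definition L2 :: "real measure \<Rightarrow> (real \<Rightarrow> complex) set" where
  "L2 \<rho> = {f. f \<in> borel_measurable \<rho> \<and> integrable \<rho> (\<lambda>x. (cmod (f x))\<^sup>2)}"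

definition inner_L2 :: "real measure \<Rightarrow> (real \<Rightarrow> complex) \<Rightarrow> (real \<Rightarrow> complex) \<Rightarrow> complex" where
  "inner_L2 \<rho> f g = (\<integral>x. f x * cnj (g x) \<partial>\<rho>)"

definition normsq_L2 :: "real measure \<Rightarrow> (real \<Rightarrow> complex) \<Rightarrow> real" where
  "normsq_L2 \<rho> f = (\<integral>x. (cmod (f x))\<^sup>2 \<partial>\<rho>)"

definition exp_ONB :: "real measure \<Rightarrow> real set \<Rightarrow> bool" where
  "exp_ONB \<rho> \<Lambda> \<longleftrightarrow>
     (\<forall>l\<in>\<Lambda>. \<forall>l'\<in>\<Lambda>. inner_L2 \<rho> (expo l) (expo l') = (if l = l' then 1 else 0)) \<and>
     (\<forall>f\<in>L2 \<rho>. (\<forall>l\<in>\<Lambda>. inner_L2 \<rho> f (expo l) = 0) \<longrightarrow> (AE x in \<rho>. f x = 0))"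

definition spectral_measure :: "real measure \<Rightarrow> bool" where
  "spectral_measure \<rho> \<longleftrightarrow> (\<exists>\<Lambda>. countable \<Lambda> \<and> exp_ONB \<rho> \<Lambda>)"

definition exp_frame :: "real measure \<Rightarrow> real set \<Rightarrow> bool" where
  "exp_frame \<rho> \<Lambda> \<longleftrightarrow> (\<exists>A B. 0 < A \<and> 0 < B \<and>
     (\<forall>f\<in>L2 \<rho>. (\<lambda>l. (cmod (inner_L2 \<rho> f (expo l)))\<^sup>2) summable_on \<Lambda> \<and>
        A * normsq_L2 \<rho> f \<le> (\<Sum>\<^sub>\<infinity>l\<in>\<Lambda>. (cmod (inner_L2 \<rho> f (expo l)))\<^sup>2) \<and>
        (\<Sum>\<^sub>\<infinity>l\<in>\<Lambda>. (cmod (inner_L2 \<rho> f (expo l)))\<^sup>2) \<le> B * normsq_L2 \<rho> f))"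

definition exp_riesz_seq :: "real measure \<Rightarrow> real set \<Rightarrow> bool" where
  "exp_riesz_seq \<rho> \<Lambda> \<longleftrightarrow> (\<exists>A B. 0 < A \<and> 0 < B \<and>
     (\<forall>F c. finite F \<and> F \<subseteq> \<Lambda> \<longrightarrow>
        A * (\<Sum>l\<in>F. (cmod (c l))\<^sup>2) \<le> normsq_L2 \<rho> (\<lambda>x. \<Sum>l\<in>F. c l * expo l x) \<and>
        normsq_L2 \<rho> (\<lambda>x. \<Sum>l\<in>F. c l * expo l x) \<le> B * (\<Sum>l\<in>F. (cmod (c l))\<^sup>2)))"

text \<open>Riesz basis = frame that is a basis (= complete Riesz sequence).\<close>
definition R_spectral_measure :: "real measure \<Rightarrow> bool" where
  "R_spectral_measure \<rho> \<longleftrightarrow>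
     (\<exists>\<Lambda>. countable \<Lambda> \<and> exp_frame \<rho> \<Lambda> \<and> exp_riesz_seq \<rho> \<Lambda>)"

definition disc_measure :: "nat set \<Rightarrow> (nat \<Rightarrow> real) \<Rightarrow> (nat \<Rightarrow> real) \<Rightarrow> real measure" where
  "disc_measure C p a = measure_of UNIV (sets borel)
     (\<lambda>A. \<Sum>c\<in>C. if a c \<in> A then ennreal (p c) else 0)"

end

theory Submission
  imports Defs
begin


lemma expo_add: "expo l (x + y) = expo l x * expo l y"
  by (simp add: expo_def distrib_left cis_mult[symmetric] algebra_simps)

lemma expo_add_freq: "expo (l + l') x = expo l x * expo l' x"
  by (simp add: expo_def distrib_left distrib_right cis_mult[symmetric] algebra_simps)

lemma expo_mult_cnj: "expo l x * cnj (expo l' x) = expo (l - l') x"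
  by (simp add: expo_def cis_cnj cis_mult algebra_simps)

lemma cnj_expo: "cnj (expo l x) = expo (- l) x"
  by (simp add: expo_def cis_cnj)

lemma norm_expo[simp]: "cmod (expo l x) = 1"
  by (simp add: expo_def)

lemma expo_nonzero[simp]: "expo l x \<noteq> 0"
  by (metis norm_expo norm_zero zero_neq_one)

lemma expo_0[simp]: "expo 0 x = 1" "expo l 0 = 1"
  by (simp_all add: expo_def)

lemma expo_swap: "expo l x = expo x l"
  by (simp add: expo_def mult_ac)

lemma expo_int: assumes "l * x \<in> \<int>" shows "expo l x = 1"
proof -
  from assms obtain k where k: "l * x = of_int k" by (auto elim: Ints_cases)
  have "expo l x = cis (2 * pi * of_int k)" unfolding expo_def by (simp add: k[symmetric] mult_ac)
  also have "\<dots> = 1" by (simp add: cis_conv_exp exp_eq_1 ) 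
  finally show ?thesis .
qed

lemma continuous_expo[continuous_intros]: "continuous_on A (expo l)"
  unfolding expo_def by (intro continuous_intros)

lemma expo_measurable[measurable]: "expo l \<in> borel_measurable borel"
  by (intro borel_measurable_continuous_onI continuous_expo)


lemma L2_integrable:
  assumes "finite_measure \<rho>" "f \<in> L2 \<rho>"
  shows "integrable \<rho> f"
proof -
  interpret finite_measure \<rho> by fact
  have m: "f \<in> borel_measurable \<rho>" and i: "integrable \<rho> (\<lambda>x. (cmod (f x))\<^sup>2)"
    using assms(2) by (auto simp: L2_def)
  have "integrable \<rho> (\<lambda>x. 1 + (cmod (f x))\<^sup>2)" using i by auto
  then show ?thesis
  proof (rule Bochner_Integration.integrable_bound)
    show "AE x in \<rho>. norm (f x) \<le> norm (1 + (cmod (f x))\<^sup>2)"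
    proof (intro AE_I2)
      fix x
      have "0 \<le> (cmod (f x) - 1)\<^sup>2" by simp
      then have "2 * cmod (f x) \<le> 1 + cmod (f x) * cmod (f x)"
        by (simp add: power2_eq_square algebra_simps)
      then have "cmod (f x) \<le> 1 + (cmod (f x))\<^sup>2"
        unfolding power2_eq_square using norm_ge_zero[of "f x"] by linarith
      then show "norm (f x) \<le> norm (1 + (cmod (f x))\<^sup>2)" by simp
    qed
  qed (use m in auto)
qed

lemma L2_mult_bounded:
  assumes "f \<in> L2 \<rho>" "g \<in> borel_measurable \<rho>" "\<And>x. cmod (g x) \<le> K"
  shows "(\<lambda>x. f x * g x) \<in> L2 \<rho>"
proof -
  have m: "f \<in> borel_measurable \<rho>" and i: "integrable \<rho> (\<lambda>x. (cmod (f x))\<^sup>2)"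
    using assms(1) by (auto simp: L2_def)
  have "integrable \<rho> (\<lambda>x. K\<^sup>2 * (cmod (f x))\<^sup>2)" using i by auto
  then have "integrable \<rho> (\<lambda>x. (cmod (f x * g x))\<^sup>2)"
  proof (rule Bochner_Integration.integrable_bound)
    show "AE x in \<rho>. norm ((cmod (f x * g x))\<^sup>2) \<le> norm (K\<^sup>2 * (cmod (f x))\<^sup>2)"
    proof (intro AE_I2)
      fix x
      have "cmod (g x) ^ 2 \<le> K ^ 2" using assms(3)[of x] by (intro power_mono) auto
      then have "(cmod (f x))\<^sup>2 * (cmod (g x))\<^sup>2 \<le> (cmod (f x))\<^sup>2 * K\<^sup>2"
        by (rule mult_left_mono) auto
      then have "(cmod (f x * g x))\<^sup>2 \<le> K\<^sup>2 * (cmod (f x))\<^sup>2"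
        by (simp add: norm_mult power_mult_distrib mult.commute)
      then show "norm ((cmod (f x * g x))\<^sup>2) \<le> norm (K\<^sup>2 * (cmod (f x))\<^sup>2)" by simp
    qed
  qed (use m assms(2) in auto)
  then show ?thesis using m assms(2) by (auto simp: L2_def)
qed

lemma L2_add:
  assumes "f \<in> L2 \<rho>" "g \<in> L2 \<rho>"
  shows "(\<lambda>x. f x + g x) \<in> L2 \<rho>"
proof -
  have m: "f \<in> borel_measurable \<rho>" "g \<in> borel_measurable \<rho>"
    and i: "integrable \<rho> (\<lambda>x. (cmod (f x))\<^sup>2)" "integrable \<rho> (\<lambda>x. (cmod (g x))\<^sup>2)"
    using assms by (auto simp: L2_def)
  have "integrable \<rho> (\<lambda>x. 2 * (cmod (f x))\<^sup>2 + 2 * (cmod (g x))\<^sup>2)" using i by auto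
  then have "integrable \<rho> (\<lambda>x. (cmod (f x + g x))\<^sup>2)"
  proof (rule Bochner_Integration.integrable_bound)
    show "AE x in \<rho>. norm ((cmod (f x + g x))\<^sup>2) \<le> norm (2 * (cmod (f x))\<^sup>2 + 2 * (cmod (g x))\<^sup>2)"
    proof (intro AE_I2)
      fix x
      have t: "cmod (f x + g x) \<le> cmod (f x) + cmod (g x)" by (rule norm_triangle_ineq)
      have "(cmod (f x + g x))\<^sup>2 \<le> (cmod (f x) + cmod (g x))\<^sup>2"
        using t by (intro power_mono) auto
      also have "\<dots> \<le> 2 * (cmod (f x))\<^sup>2 + 2 * (cmod (g x))\<^sup>2"
        using zero_le_power2[of "cmod (f x) - cmod (g x)"] by (simp add: power2_eq_square algebra_simps)
      finally show "norm ((cmod (f x + g x))\<^sup>2) \<le> norm (2 * (cmod (f x))\<^sup>2 + 2 * (cmod (g x))\<^sup>2)"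
        by simp
    qed
  qed (use m in auto)
  then show ?thesis using m by (auto simp: L2_def)
qed

lemma L2_zero: "(\<lambda>x. 0) \<in> L2 \<rho>" by (simp add: L2_def)

lemma L2_sum:
  assumes "\<And>i. i \<in> I \<Longrightarrow> f i \<in> L2 \<rho>"
  shows "(\<lambda>x. \<Sum>i\<in>I. f i x) \<in> L2 \<rho>"
  using assms
proof (induction I rule: infinite_finite_induct)
  case (insert i I)
  then show ?case using L2_add[of "f i" \<rho> "\<lambda>x. \<Sum>i\<in>I. f i x"] by simp
qed (auto simp: L2_zero)

lemma L2_const:
  assumes "finite_measure \<rho>" shows "(\<lambda>x. c) \<in> L2 \<rho>"
proof -
  interpret finite_measure \<rho> by fact
  show ?thesis by (simp add: L2_def)
qed

lemma L2_cmult: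
  assumes "f \<in> L2 \<rho>" shows "(\<lambda>x. c * f x) \<in> L2 \<rho>"
  using L2_mult_bounded[OF assms, of "\<lambda>_. c" "cmod c"] by (simp add: mult.commute)

lemma L2_expo:
  assumes "finite_measure \<rho>" "sets \<rho> = sets borel" shows "expo l \<in> L2 \<rho>"
  using L2_mult_bounded[OF L2_const[OF assms(1), of 1], of "expo l" 1] assms(2)
  by (simp add: measurable_cong_sets[OF assms(2) refl])

lemma inner_integrable:
  assumes "finite_measure \<rho>" "sets \<rho> = sets borel" "f \<in> L2 \<rho>"
  shows "integrable \<rho> (\<lambda>x. f x * cnj (expo l x))"
proof -
  have "(\<lambda>x. f x * cnj (expo l x)) \<in> L2 \<rho>"
    using assms(2,3) by (intro L2_mult_bounded[where K=1]) (auto simp: measurable_cong_sets[OF assms(2) refl] cnj_expo)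
  then show ?thesis using L2_integrable assms(1) by blast
qed

lemma inner_L2_expo: "inner_L2 \<rho> (expo l) (expo l') = fourier_measure \<rho> (l - l')"
  by (simp add: inner_L2_def fourier_measure_def expo_mult_cnj)

lemma disc_eq:
  assumes "finite C"
  shows "disc_measure C p a = distr (density (count_space C) (\<lambda>c. ennreal (p c))) borel a"
    (is "_ = ?D")
proof -
  have e: "emeasure ?D A = (\<Sum>c\<in>C. if a c \<in> A then ennreal (p c) else 0)" if "A \<in> sets borel" for A
  proof -
    have "emeasure ?D A = emeasure (density (count_space C) (\<lambda>c. ennreal (p c))) (a -` A \<inter> C)"
      using that by (subst emeasure_distr) auto
    also have "\<dots> = (\<integral>\<^sup>+ c. ennreal (p c) * indicator (a -` A \<inter> C) c \<partial>count_space C)"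
      by (subst emeasure_density) auto
    also have "\<dots> = (\<Sum>c\<in>C. ennreal (p c) * indicator (a -` A \<inter> C) c)"
      using assms by (simp add: nn_integral_count_space_finite)
    also have "\<dots> = (\<Sum>c\<in>C. if a c \<in> A then ennreal (p c) else 0)"
      by (intro sum.cong) (auto simp: indicator_def)
    finally show ?thesis .
  qed
  have "disc_measure C p a = measure_of (space ?D) (sets ?D) (emeasure ?D)"
    unfolding disc_measure_def
    by (simp, intro measure_of_eq) (auto simp: e sets.sigma_sets_eq[of borel, simplified])
  also have "\<dots> = ?D" by (rule measure_of_of_measure)
  finally show ?thesis .
qed


lemma sets_disc[simp, measurable_cong]: "sets (disc_measure C p a) = sets borel"
  unfolding disc_measure_def by (simp add: sets_measure_of_conv sets.sigma_sets_eq[of borel, simplified])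

lemma space_disc[simp]: "space (disc_measure C p a) = UNIV"
  unfolding disc_measure_def by (simp add: space_measure_of_conv)

lemma borel_measurable_disc[simp]: "borel_measurable (disc_measure C p a) = borel_measurable borel"
  by (rule measurable_cong_sets) auto

lemma emeasure_disc:
  assumes "finite C" "A \<in> sets borel"
  shows "emeasure (disc_measure C p a) A = (\<Sum>c\<in>C. if a c \<in> A then ennreal (p c) else 0)"
proof -
  have "emeasure (disc_measure C p a) A = emeasure (density (count_space C) (\<lambda>c. ennreal (p c))) (a -` A \<inter> C)"
    using assms by (simp add: disc_eq emeasure_distr)
  also have "\<dots> = (\<integral>\<^sup>+ c. ennreal (p c) * indicator (a -` A \<inter> C) c \<partial>count_space C)"
    by (subst emeasure_density) auto
  also have "\<dots> = (\<Sum>c\<in>C. ennreal (p c) * indicator (a -` A \<inter> C) c)"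
    using assms by (simp add: nn_integral_count_space_finite)
  also have "\<dots> = (\<Sum>c\<in>C. if a c \<in> A then ennreal (p c) else 0)"
    by (intro sum.cong) (auto simp: indicator_def)
  finally show ?thesis .
qed

lemma integral_disc:
  fixes h :: "real \<Rightarrow> 'b::{banach, second_countable_topology}"
  assumes "finite C" "\<forall>c\<in>C. p c \<ge> 0" "h \<in> borel_measurable borel"
  shows "integral\<^sup>L (disc_measure C p a) h = (\<Sum>c\<in>C. p c *\<^sub>R h (a c))"
proof -
  have "integral\<^sup>L (disc_measure C p a) h = integral\<^sup>L (density (count_space C) (\<lambda>c. ennreal (p c))) (\<lambda>c. h (a c))"
    using assms by (simp add: disc_eq integral_distr)
  also have "\<dots> = integral\<^sup>L (count_space C) (\<lambda>c. p c *\<^sub>R h (a c))"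
    using assms by (subst integral_density) (auto simp: AE_count_space)
  also have "\<dots> = (\<Sum>c\<in>C. p c *\<^sub>R h (a c))"
    using assms by (simp add: lebesgue_integral_count_space_finite)
  finally show ?thesis .
qed

lemma integrable_disc:
  fixes h :: "real \<Rightarrow> 'b::{banach, second_countable_topology}"
  assumes "finite C" "\<forall>c\<in>C. p c \<ge> 0" "h \<in> borel_measurable borel"
  shows "integrable (disc_measure C p a) h"
proof -
  have "integrable (density (count_space C) (\<lambda>c. ennreal (p c))) (\<lambda>c. h (a c))"
    using assms by (subst integrable_density) (auto simp: AE_count_space integrable_count_space)
  then show ?thesis
    using assms by (simp add: disc_eq integrable_distr_eq)
qed

lemma L2_disc:
  assumes "finite C" "\<forall>c\<in>C. p c \<ge> 0" "h \<in> borel_measurable borel"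
  shows "h \<in> L2 (disc_measure C p a)"
  using assms integrable_disc[OF assms(1,2), of "\<lambda>x. (cmod (h x))\<^sup>2"] by (auto simp: L2_def)

lemma inner_disc:
  assumes "finite C" "\<forall>c\<in>C. p c \<ge> 0" "g \<in> borel_measurable borel"
  shows "inner_L2 (disc_measure C p a) g (expo l) = (\<Sum>c\<in>C. of_real (p c) * g (a c) * cnj (expo l (a c)))"
  unfolding inner_L2_def using assms
  by (subst integral_disc) (auto simp: cnj_expo scaleR_conv_of_real mult_ac)

lemma AE_disc:
  assumes "finite C" "\<forall>c\<in>C. P (a c)"
  shows "AE x in disc_measure C p a. P x"
proof (rule AE_I')
  show "{x \<in> space (disc_measure C p a). \<not> P x} \<subseteq> UNIV - a ` C" using assms by auto
  have "UNIV - a ` C \<in> sets borel" using assms by (intro borel_open open_Diff finite_imp_closed) auto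
  moreover have "emeasure (disc_measure C p a) (UNIV - a ` C) = 0"
    using assms calculation by (simp add: emeasure_disc)
  ultimately show "UNIV - a ` C \<in> null_sets (disc_measure C p a)" by (auto simp: null_sets_def)
qed

lemma AE_disc_D:
  assumes "finite C" "AE x in disc_measure C p a. P x" "c \<in> C" "p c > 0"
  shows "P (a c)"
proof (rule ccontr)
  assume np: "\<not> P (a c)"
  obtain N where N0: "{x \<in> space (disc_measure C p a). \<not> P x} \<subseteq> N"
    "emeasure (disc_measure C p a) N = 0" "N \<in> sets (disc_measure C p a)"
    using assms(2) by (rule AE_E)
  then have N: "{x. \<not> P x} \<subseteq> N" "N \<in> null_sets (disc_measure C p a)" by auto
  have "emeasure (disc_measure C p a) {a c} \<le> emeasure (disc_measure C p a) N"
    using N np by (intro emeasure_mono) auto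
  also have "\<dots> = 0" using N by auto
  finally have z: "emeasure (disc_measure C p a) {a c} = 0" by simp
  have "emeasure (disc_measure C p a) {a c} = (\<Sum>c'\<in>C. if a c' \<in> {a c} then ennreal (p c') else 0)"
    using assms by (simp add: emeasure_disc)
  also have "\<dots> \<ge> (if a c \<in> {a c} then ennreal (p c) else 0)"
    using assms by (intro member_le_sum) auto
  finally have "ennreal (p c) \<le> 0" using z by simp
  then show False using assms by simp
qed

lemma prob_space_disc:
  assumes "finite C" "\<forall>c\<in>C. p c \<ge> 0" "(\<Sum>c\<in>C. p c) = 1"
  shows "prob_space (disc_measure C p a)"
proof
  have "emeasure (disc_measure C p a) UNIV = (\<Sum>c\<in>C. ennreal (p c))"
    using assms by (simp add: emeasure_disc)
  also have "\<dots> = ennreal (\<Sum>c\<in>C. p c)" using assms by (simp add: sum_ennreal)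
  finally show "emeasure (disc_measure C p a) (space (disc_measure C p a)) = 1" using assms by simp
qed


lemma ennreal_mult_less_top_pos: "(w::real) > 0 \<Longrightarrow> ennreal w * x < top \<longleftrightarrow> x < top"
  by (auto simp: ennreal_mult_less_top)

lemma wsum_integrable:
  fixes M :: "real measure" and N :: "nat \<Rightarrow> real measure" and w :: "nat \<Rightarrow> real"
    and f :: "real \<Rightarrow> 'b::{banach, second_countable_topology}"
  assumes sM: "sets M = sets borel" and sN: "\<And>c. c \<in> C \<Longrightarrow> sets (N c) = sets borel"
    and fin: "finite C" and w: "\<And>c. c \<in> C \<Longrightarrow> w c > 0"
    and nn: "\<And>h. h \<in> borel_measurable borel \<Longrightarrow> (\<integral>\<^sup>+x. h x \<partial>M) = (\<Sum>c\<in>C. ennreal (w c) * (\<integral>\<^sup>+x. h x \<partial>N c))"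
    and fm: "f \<in> borel_measurable borel"
  shows "integrable M f \<longleftrightarrow> (\<forall>c\<in>C. integrable (N c) f)"
proof -
  have m1: "f \<in> borel_measurable M" using fm by (simp add: measurable_cong_sets[OF sM refl])
  have m2: "f \<in> borel_measurable (N c)" if "c \<in> C" for c
    using fm by (simp add: measurable_cong_sets[OF sN[OF that] refl])
  have "(\<integral>\<^sup>+x. norm (f x) \<partial>M) = (\<Sum>c\<in>C. ennreal (w c) * (\<integral>\<^sup>+x. norm (f x) \<partial>N c))"
    using fm by (intro nn) auto
  then have "(\<integral>\<^sup>+x. norm (f x) \<partial>M) < \<infinity> \<longleftrightarrow> (\<forall>c\<in>C. (\<integral>\<^sup>+x. norm (f x) \<partial>N c) < \<infinity>)"
    using fin w by (auto simp: ennreal_mult_less_top_pos)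
  then show ?thesis using m1 m2 by (auto simp: integrable_iff_bounded)
qed

lemma wsum_integral:
  fixes M :: "real measure" and N :: "nat \<Rightarrow> real measure" and w :: "nat \<Rightarrow> real"
    and f :: "real \<Rightarrow> 'b::{banach, second_countable_topology}"
  assumes sM: "sets M = sets borel" and sN: "\<And>c. c \<in> C \<Longrightarrow> sets (N c) = sets borel"
    and fin: "finite C" and w: "\<And>c. c \<in> C \<Longrightarrow> w c > 0"
    and nn: "\<And>h. h \<in> borel_measurable borel \<Longrightarrow> (\<integral>\<^sup>+x. h x \<partial>M) = (\<Sum>c\<in>C. ennreal (w c) * (\<integral>\<^sup>+x. h x \<partial>N c))"
    and fi: "integrable M f"
  shows "integral\<^sup>L M f = (\<Sum>c\<in>C. w c *\<^sub>R integral\<^sup>L (N c) f)"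
proof -
  have int_iff: "integrable M g \<longleftrightarrow> (\<forall>c\<in>C. integrable (N c) g)" if "g \<in> borel_measurable borel"
    for g :: "real \<Rightarrow> 'b"
    by (rule wsum_integrable[OF sM sN fin w nn that]) auto
  have int_iff_r: "integrable M g \<longleftrightarrow> (\<forall>c\<in>C. integrable (N c) g)" if "g \<in> borel_measurable borel"
    for g :: "real \<Rightarrow> real"
    by (rule wsum_integrable[OF sM sN fin w nn that]) auto
  have intN: "integrable (N c) g" if "integrable M g" "c \<in> C" for g :: "real \<Rightarrow> 'b" and c
  proof -
    have "g \<in> borel_measurable borel" using that borel_measurable_integrable
      by (metis measurable_cong_sets[OF sM refl])
    then show ?thesis using int_iff that by auto
  qed
  from fi show ?thesis
  proof induct
    case (base A c0)
    have A: "A \<in> sets borel" using base sM by auto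
    have e: "emeasure M A = (\<Sum>c\<in>C. ennreal (w c) * emeasure (N c) A)"
      using nn[of "indicator A"] A sN sM by (simp add: borel_measurable_indicator)
    have fin_c: "emeasure (N c) A < \<infinity>" if "c \<in> C" for c
    proof -
      have "(\<Sum>c\<in>C. ennreal (w c) * emeasure (N c) A) < \<infinity>" using e base by simp
      then have "ennreal (w c) * emeasure (N c) A < \<infinity>" using fin that by simp
      then show ?thesis using w[OF that] by (auto simp: ennreal_mult_less_top)
    qed
    have "measure M A = enn2real (\<Sum>c\<in>C. ennreal (w c) * emeasure (N c) A)"
      by (simp add: measure_def e)
    also have "\<dots> = (\<Sum>c\<in>C. w c * measure (N c) A)"
      using fin_c w by (subst enn2real_sum) (auto simp: ennreal_mult_less_top enn2real_mult measure_def
          intro!: sum.cong less_imp_le)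
    finally have mA: "measure M A = (\<Sum>c\<in>C. w c * measure (N c) A)" .
    have "integral\<^sup>L M (\<lambda>x. indicator A x *\<^sub>R c0) = measure M A *\<^sub>R c0"
      using base A sM by (subst integral_scaleR_left) (auto simp: integrable_real_indicator)
    also have "\<dots> = (\<Sum>c\<in>C. w c *\<^sub>R (measure (N c) A *\<^sub>R c0))"
      by (simp add: mA scaleR_sum_left)
    also have "\<dots> = (\<Sum>c\<in>C. w c *\<^sub>R integral\<^sup>L (N c) (\<lambda>x. indicator A x *\<^sub>R c0))"
    proof (intro sum.cong refl)
      fix c assume c: "c \<in> C"
      have "integral\<^sup>L (N c) (\<lambda>x. indicator A x *\<^sub>R c0) = measure (N c) A *\<^sub>R c0"
        using fin_c[OF c] A sN[OF c] by (subst integral_scaleR_left) (auto simp: integrable_real_indicator)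
      then show "w c *\<^sub>R (measure (N c) A *\<^sub>R c0) = w c *\<^sub>R integral\<^sup>L (N c) (\<lambda>x. indicator A x *\<^sub>R c0)"
        by simp
    qed
    finally show ?case .
  next
    case (add f g)
    have "integral\<^sup>L M (\<lambda>x. f x + g x) = integral\<^sup>L M f + integral\<^sup>L M g"
      using add by simp
    also have "\<dots> = (\<Sum>c\<in>C. w c *\<^sub>R (integral\<^sup>L (N c) f + integral\<^sup>L (N c) g))"
      using add by (simp add: sum.distrib scaleR_add_right)
    also have "\<dots> = (\<Sum>c\<in>C. w c *\<^sub>R integral\<^sup>L (N c) (\<lambda>x. f x + g x))"
      using add intN by (intro sum.cong refl) auto
    finally show ?case .
  next
    case (lim f s)
    have fm: "f \<in> borel_measurable borel"
      using lim(5) borel_measurable_integrable by (metis measurable_cong_sets[OF sM refl])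
    have sm: "s i \<in> borel_measurable borel" for i
      using lim(1) borel_measurable_integrable by (metis measurable_cong_sets[OF sM refl])
    have wi: "integrable M (\<lambda>x. 2 * norm (f x))" using lim(5) by auto
    have L1: "(\<lambda>i. integral\<^sup>L M (s i)) \<longlonglongrightarrow> integral\<^sup>L M f"
      using lim sM by (intro integral_dominated_convergence[where w="\<lambda>x. 2 * norm (f x)"])
        (auto simp: measurable_cong_sets[OF sM refl] fm sm wi)
    have L2': "(\<lambda>i. integral\<^sup>L (N c) (s i)) \<longlonglongrightarrow> integral\<^sup>L (N c) f" if c: "c \<in> C" for c
    proof (rule integral_dominated_convergence[where w="\<lambda>x. 2 * norm (f x)"])
      show "f \<in> borel_measurable (N c)" using fm by (simp add: measurable_cong_sets[OF sN[OF c] refl])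
      show "s i \<in> borel_measurable (N c)" for i using sm by (simp add: measurable_cong_sets[OF sN[OF c] refl])
      show "integrable (N c) (\<lambda>x. 2 * norm (f x))" using intN[OF lim(5) c] by auto
      show "AE x in N c. (\<lambda>i. s i x) \<longlonglongrightarrow> f x" using lim(3) sM sN[OF c]
        by (intro AE_I2) (simp add: sets_eq_imp_space_eq)
      show "AE x in N c. norm (s i x) \<le> 2 * norm (f x)" for i using lim(4) sM sN[OF c]
        by (intro AE_I2) (simp add: sets_eq_imp_space_eq)
    qed
    have L3: "(\<lambda>i. \<Sum>c\<in>C. w c *\<^sub>R integral\<^sup>L (N c) (s i)) \<longlonglongrightarrow> (\<Sum>c\<in>C. w c *\<^sub>R integral\<^sup>L (N c) f)"
      using L2' by (intro tendsto_sum tendsto_scaleR tendsto_const) auto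
    have "(\<lambda>i. integral\<^sup>L M (s i)) = (\<lambda>i. \<Sum>c\<in>C. w c *\<^sub>R integral\<^sup>L (N c) (s i))"
      using lim(2) by auto
    with L1 L3 show ?case using LIMSEQ_unique by metis
  qed
qed


lemma nn_integral_disc:
  assumes "finite C" "\<forall>c\<in>C. p c \<ge> 0" "g \<in> borel_measurable borel"
  shows "(\<integral>\<^sup>+x. g x \<partial>disc_measure C p a) = (\<Sum>c\<in>C. ennreal (p c) * g (a c))"
proof -
  have "(\<integral>\<^sup>+x. g x \<partial>disc_measure C p a) = (\<integral>\<^sup>+c. g (a c) \<partial>density (count_space C) (\<lambda>c. ennreal (p c)))"
    using assms by (simp add: disc_eq nn_integral_distr)
  also have "\<dots> = (\<integral>\<^sup>+c. ennreal (p c) * g (a c) \<partial>count_space C)"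
    by (subst nn_integral_density) auto
  also have "\<dots> = (\<Sum>c\<in>C. ennreal (p c) * g (a c))"
    using assms by (simp add: nn_integral_count_space_finite)
  finally show ?thesis .
qed

definition Ef :: "nat set \<Rightarrow> (nat \<Rightarrow> real) \<Rightarrow> nat \<Rightarrow> real \<Rightarrow> complex" where
  "Ef C p q \<xi> = (\<Sum>c\<in>C. of_real (p c) * expo \<xi> (real q * real c))"

locale cset =
  fixes \<nu> :: "real measure" and q :: nat and C :: "nat set" and p :: "nat \<Rightarrow> real"
  assumes sets_nu[measurable_cong]: "sets \<nu> = sets borel" and prob_nu: "prob_space \<nu>"
    and fin: "finite C" and ppos: "\<And>c. c \<in> C \<Longrightarrow> p c > 0" and psum: "(\<Sum>c\<in>C. p c) = 1"
    and q1: "q \<ge> 1"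
begin

abbreviation "etaq \<equiv> disc_measure C p (\<lambda>c. real q * real c)"
abbreviation "eta \<equiv> disc_measure C p real"
abbreviation "mu \<equiv> convolution etaq \<nu>"
abbreviation "trn c \<equiv> distr \<nu> borel (\<lambda>y. real q * real c + y)"

lemma pnn: "\<forall>c\<in>C. p c \<ge> 0" using ppos by (auto intro: less_imp_le)

lemma space_nu[simp]: "space \<nu> = UNIV"
  using sets_eq_imp_space_eq[OF sets_nu] by simp

lemma meas_nu[simp]: "borel_measurable \<nu> = borel_measurable borel"
  by (rule measurable_cong_sets) (auto simp: sets_nu)

lemma fm_nu: "finite_measure \<nu>" using prob_nu by (simp add: prob_space_def)

lemma prob_eta: "prob_space (disc_measure C p a)"
  using prob_space_disc[OF fin pnn psum] .

lemma fm_eta: "finite_measure (disc_measure C p a)"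
  using prob_eta by (simp add: prob_space_def)

lemma nn_mu:
  assumes hm: "h \<in> borel_measurable borel"
  shows "(\<integral>\<^sup>+x. h x \<partial>mu) = (\<Sum>c\<in>C. ennreal (p c) * (\<integral>\<^sup>+x. h x \<partial>trn c))"
proof -
  interpret N: prob_space \<nu> by (rule prob_nu)
  have "(\<integral>\<^sup>+x. h x \<partial>mu) = (\<integral>\<^sup>+x. \<integral>\<^sup>+y. h (x + y) \<partial>\<nu> \<partial>etaq)"
    using hm by (intro nn_integral_convolution fm_eta fm_nu) (auto simp: sets_nu)
  also have "\<dots> = (\<Sum>c\<in>C. ennreal (p c) * (\<integral>\<^sup>+y. h (real q * real c + y) \<partial>\<nu>))"
  proof (rule nn_integral_disc[OF fin pnn])
    have s: "sets (borel \<Otimes>\<^sub>M \<nu>) = sets (borel \<Otimes>\<^sub>M borel)"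
      by (rule sets_pair_measure_cong) (auto simp: sets_nu)
    have "(\<lambda>(x, y). h (x + y)) \<in> borel_measurable (borel \<Otimes>\<^sub>M borel)"
      using hm by measurable
    then have "(\<lambda>(x, y). h (x + y)) \<in> borel_measurable (borel \<Otimes>\<^sub>M \<nu>)"
      by (simp add: measurable_cong_sets[OF s refl])
    from N.borel_measurable_nn_integral_fst[OF this]
    show "(\<lambda>x. \<integral>\<^sup>+ y. h (x + y) \<partial>\<nu>) \<in> borel_measurable borel" by simp
  qed
  also have "\<dots> = (\<Sum>c\<in>C. ennreal (p c) * (\<integral>\<^sup>+x. h x \<partial>trn c))"
    using hm by (intro sum.cong refl) (simp add: nn_integral_distr)
  finally show ?thesis .
qed

lemma integrable_mu:
  fixes h :: "real \<Rightarrow> 'b::{banach, second_countable_topology}"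
  assumes hm: "h \<in> borel_measurable borel"
  shows "integrable mu h \<longleftrightarrow> (\<forall>c\<in>C. integrable \<nu> (\<lambda>y. h (real q * real c + y)))"
proof -
  have "integrable mu h \<longleftrightarrow> (\<forall>c\<in>C. integrable (trn c) h)"
    by (rule wsum_integrable[OF _ _ fin ppos nn_mu hm]) auto
  also have "\<dots> \<longleftrightarrow> (\<forall>c\<in>C. integrable \<nu> (\<lambda>y. h (real q * real c + y)))"
    using hm by (simp add: integrable_distr_eq)
  finally show ?thesis .
qed

lemma integral_mu:
  fixes h :: "real \<Rightarrow> 'b::{banach, second_countable_topology}"
  assumes hi: "integrable mu h"
  shows "integral\<^sup>L mu h = (\<Sum>c\<in>C. p c *\<^sub>R (\<integral>y. h (real q * real c + y) \<partial>\<nu>))"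
proof -
  have hm: "h \<in> borel_measurable borel"
    using borel_measurable_integrable[OF hi] by simp
  have "integral\<^sup>L mu h = (\<Sum>c\<in>C. p c *\<^sub>R integral\<^sup>L (trn c) h)"
    by (rule wsum_integral[OF _ _ fin ppos nn_mu hi]) auto
  also have "\<dots> = (\<Sum>c\<in>C. p c *\<^sub>R (\<integral>y. h (real q * real c + y) \<partial>\<nu>))"
    using hm by (simp add: integral_distr)
  finally show ?thesis .
qed

lemma emeasure_mu:
  assumes A: "A \<in> sets borel"
  shows "emeasure mu A = (\<Sum>c\<in>C. ennreal (p c) * emeasure \<nu> ((\<lambda>y. real q * real c + y) -` A))"
proof -
  have "emeasure mu A = (\<integral>\<^sup>+x. indicator A x \<partial>mu)" using A by simp
  also have "\<dots> = (\<Sum>c\<in>C. ennreal (p c) * (\<integral>\<^sup>+x. indicator A x \<partial>trn c))"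
    using A by (intro nn_mu) auto
  also have "\<dots> = (\<Sum>c\<in>C. ennreal (p c) * emeasure \<nu> ((\<lambda>y. real q * real c + y) -` A))"
    using A by (intro sum.cong refl) (simp add: emeasure_distr)
  finally show ?thesis .
qed

lemma prob_mu: "prob_space mu"
proof
  have "emeasure mu (space mu) = (\<Sum>c\<in>C. ennreal (p c) * emeasure \<nu> UNIV)"
    using emeasure_mu[of UNIV] by simp
  also have "\<dots> = (\<Sum>c\<in>C. ennreal (p c))"
    using prob_space.emeasure_space_1[OF prob_nu] by simp
  also have "\<dots> = 1" using pnn psum by (simp add: sum_ennreal)
  finally show "emeasure mu (space mu) = 1" .
qed

lemma fm_mu: "finite_measure mu" using prob_mu by (simp add: prob_space_def)

lemma compl_borel: assumes "{x. P x} \<in> sets borel" shows "{x. \<not> P x} \<in> sets borel"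
proof -
  have "UNIV - {x. P x} \<in> sets borel" using sets.compl_sets[OF assms] by simp
  moreover have "UNIV - {x. P x} = {x. \<not> P x}" by auto
  ultimately show ?thesis by simp
qed

lemma AE_mu:
  assumes P: "{x. P x} \<in> sets borel" and h: "\<forall>c\<in>C. AE y in \<nu>. P (real q * real c + y)"
  shows "AE x in mu. P x"
proof -
  have N: "{x. \<not> P x} \<in> sets borel" using P by (rule compl_borel)
  have z: "emeasure \<nu> ((\<lambda>y. real q * real c + y) -` {x. \<not> P x}) = 0" if c: "c \<in> C" for c
  proof -
    have m: "(\<lambda>y. real q * real c + y) -` {x. \<not> P x} \<in> sets \<nu>"
    proof -
      have "(\<lambda>y. real q * real c + y) \<in> borel_measurable \<nu>" by simp
      from measurable_sets[OF this N] show ?thesis by simp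
    qed
    have "AE y in \<nu>. P (real q * real c + y)" using h c by blast
    then show ?thesis
      using AE_iff_measurable[OF m, of "\<lambda>y. P (real q * real c + y)"] by auto
  qed
  have "emeasure mu {x. \<not> P x} = (\<Sum>c\<in>C. ennreal (p c) * emeasure \<nu> ((\<lambda>y. real q * real c + y) -` {x. \<not> P x}))"
    using N by (rule emeasure_mu)
  also have "\<dots> = 0" using z by (intro sum.neutral) simp
  finally have "emeasure mu {x. \<not> P x} = 0" .
  then show ?thesis using AE_iff_measurable[of "{x. \<not> P x}" mu P] N by simp
qed

lemma AE_mu_D:
  assumes P: "{x. P x} \<in> sets borel" and h: "AE x in mu. P x" and c: "c \<in> C"
  shows "AE y in \<nu>. P (real q * real c + y)"
proof -
  have N: "{x. \<not> P x} \<in> sets borel" using P by (rule compl_borel)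
  have "emeasure mu {x. \<not> P x} = 0"
    using AE_iff_measurable[of "{x. \<not> P x}" mu P] h N by simp
  then have s0: "(\<Sum>c\<in>C. ennreal (p c) * emeasure \<nu> ((\<lambda>y. real q * real c + y) -` {x. \<not> P x})) = 0"
    using emeasure_mu[OF N] by metis
  have "ennreal (p c) * emeasure \<nu> ((\<lambda>y. real q * real c + y) -` {x. \<not> P x})
     \<le> (\<Sum>c\<in>C. ennreal (p c) * emeasure \<nu> ((\<lambda>y. real q * real c + y) -` {x. \<not> P x}))"
    by (rule member_le_sum[OF c _ fin]) auto
  then have "ennreal (p c) * emeasure \<nu> ((\<lambda>y. real q * real c + y) -` {x. \<not> P x}) = 0"
    using s0 by (metis le_zero_eq)
  then have z: "emeasure \<nu> ((\<lambda>y. real q * real c + y) -` {x. \<not> P x}) = 0"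
    using ppos[OF c] by (metis ennreal_eq_0_iff mult_eq_0_iff not_le)
  have "(\<lambda>y. real q * real c + y) -` {x. \<not> P x} \<in> sets \<nu>"
    proof -
    have "(\<lambda>y. real q * real c + y) \<in> borel_measurable \<nu>" by simp
    from measurable_sets[OF this N] show ?thesis by simp
    qed
  then show ?thesis using z AE_iff_measurable[of "(\<lambda>y. real q * real c + y) -` {x. \<not> P x}" \<nu>] by auto
qed

lemma fourier_nu_0: "fourier_measure \<nu> 0 = 1"
  using prob_space.prob_space[OF prob_nu] by (simp add: fourier_measure_def measure_def)

lemma inner_mu_expo:
  "inner_L2 mu (expo l) (expo l') = Ef C p q (l - l') * fourier_measure \<nu> (l - l')"
proof -
  interpret N: prob_space \<nu> by (rule prob_nu)
  have int: "integrable mu (expo (l - l'))"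
    by (rule L2_integrable[OF fm_mu L2_expo[OF fm_mu]]) simp
  have "inner_L2 mu (expo l) (expo l') = integral\<^sup>L mu (expo (l - l'))"
    unfolding inner_L2_def by (simp only: expo_mult_cnj)
  also have "\<dots> = (\<Sum>c\<in>C. p c *\<^sub>R (\<integral>y. expo (l - l') (real q * real c + y) \<partial>\<nu>))"
    by (rule integral_mu[OF int])
  also have "\<dots> = (\<Sum>c\<in>C. of_real (p c) * expo (l - l') (real q * real c) * fourier_measure \<nu> (l - l'))"
  proof (intro sum.cong refl)
    fix c
    have "(\<integral>y. expo (l - l') (real q * real c + y) \<partial>\<nu>) = (\<integral>y. expo (l - l') (real q * real c) * expo (l - l') y \<partial>\<nu>)"
      by (simp only: expo_add)
    also have "\<dots> = expo (l - l') (real q * real c) * fourier_measure \<nu> (l - l')"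
      unfolding fourier_measure_def by (rule integral_mult_right_zero)
    finally show "p c *\<^sub>R (\<integral>y. expo (l - l') (real q * real c + y) \<partial>\<nu>) =
      complex_of_real (p c) * expo (l - l') (real q * real c) * fourier_measure \<nu> (l - l')"
      by (simp only: scaleR_conv_of_real mult.assoc)
  qed
  also have "\<dots> = Ef C p q (l - l') * fourier_measure \<nu> (l - l')"
    unfolding Ef_def by (simp only: sum_distrib_right)
  finally show ?thesis .
qed

lemma Ef_int: assumes "real q * \<xi> \<in> \<int>" shows "Ef C p q \<xi> = 1"
proof -
  have "Ef C p q \<xi> = (\<Sum>c\<in>C. of_real (p c))"
  proof (unfold Ef_def, intro sum.cong refl)
    fix c
    have "\<xi> * (real q * real c) = (real q * \<xi>) * real c" by simp
    also have "\<dots> \<in> \<int>" by (rule Ints_mult[OF assms]) simp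
    finally show "complex_of_real (p c) * expo \<xi> (real q * real c) = complex_of_real (p c)"
      by (simp add: expo_int)
  qed
  also have "\<dots> = 1" using psum by (metis of_real_1 of_real_sum)
  finally show ?thesis .
qed

end


definition lift :: "(nat \<Rightarrow> real set) \<Rightarrow> nat \<Rightarrow> nat set \<Rightarrow> (nat \<Rightarrow> complex) \<Rightarrow> (real \<Rightarrow> complex) \<Rightarrow> real \<Rightarrow> complex" where
  "lift J q C a f x = (\<Sum>c\<in>C. indicator (J c) x *\<^sub>R (a c * f (x - real q * real c)))"

context cset
begin

lemma AE_support:
  assumes supp: "measure_support \<nu> \<subseteq> {0..1}"
  shows "AE y in \<nu>. y \<in> {0..1}"
proof -
  define B where "B = {(r, s). r \<in> \<rat> \<and> s \<in> \<rat> \<and> s > 0 \<and> emeasure \<nu> (ball r s) = 0}"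
  have cB: "countable B"
  proof (rule countable_subset)
    show "B \<subseteq> \<rat> \<times> \<rat>" unfolding B_def by auto
    show "countable (\<rat> \<times> (\<rat>::real set))" by (intro countable_SIGMA countable_rat)
  qed
  define U where "U = (\<Union>i\<in>B. ball (fst i) (snd i))"
  have U: "U \<in> null_sets \<nu>"
    unfolding U_def
  proof (rule null_sets_UN'[OF cB])
    fix i assume "i \<in> B"
    then show "ball (fst i) (snd i) \<in> null_sets \<nu>"
      by (auto simp: B_def null_sets_def sets_nu)
  qed
  show ?thesis
  proof (rule AE_I'[OF U])
    show "{x \<in> space \<nu>. x \<notin> {0..1}} \<subseteq> U"
    proof
      fix x assume "x \<in> {x \<in> space \<nu>. x \<notin> {0..1}}"
      then have "x \<notin> measure_support \<nu>" using supp by auto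
      then obtain e where e: "e > 0" "\<not> emeasure \<nu> (ball x e) > 0"
        by (auto simp: measure_support_def)
      then have e0: "emeasure \<nu> (ball x e) = 0" by (simp add: not_gr_zero)
      obtain r where r: "r \<in> \<rat>" "x - e/4 < r" "r < x + e/4"
        using Rats_dense_in_real[of "x - e/4" "x + e/4"] e by auto
      have d: "dist r x < e/4" unfolding dist_real_def abs_real_def using r by auto
      obtain s where s: "s \<in> \<rat>" "e/4 < s" "s < e/2"
        using Rats_dense_in_real[of "e/4" "e/2"] e by auto
      have sub: "ball r s \<subseteq> ball x e"
      proof
        fix z assume "z \<in> ball r s"
        then have "dist r z < s" by simp
        then have "dist x z < e" using d s dist_triangle[of x z r] by (simp add: dist_commute)
        then show "z \<in> ball x e" by simp
      qed
      have "emeasure \<nu> (ball r s) \<le> emeasure \<nu> (ball x e)"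
        by (rule emeasure_mono[OF sub]) (simp add: sets_nu)
      then have "emeasure \<nu> (ball r s) = 0" using e0 by simp
      then have "(r, s) \<in> B" using r s e by (auto simp: B_def)
      moreover have "x \<in> ball r s" using d s by (simp add: dist_commute)
      ultimately show "x \<in> U" unfolding U_def by force
    qed
  qed
qed

lemma lift_meas:
  assumes J: "\<And>c. c \<in> C \<Longrightarrow> J c \<in> sets borel" and f: "f \<in> borel_measurable borel"
  shows "lift J q C a f \<in> borel_measurable borel"
  unfolding lift_def
proof (intro borel_measurable_sum borel_measurable_scaleR borel_measurable_indicator)
  fix c assume c: "c \<in> C"
  show "J c \<in> sets borel" using J[OF c] .
  have "(\<lambda>x. x - real q * real c) \<in> borel_measurable borel" by simp
  then have "(\<lambda>x. f (x - real q * real c)) \<in> borel_measurable borel"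
    using f by (rule measurable_compose)
  then show "(\<lambda>x. a c * f (x - real q * real c)) \<in> borel_measurable borel" by simp
qed

lemma lift_ae:
  assumes J: "\<And>c. c \<in> C \<Longrightarrow> J c \<in> sets borel"
    and disj: "\<And>c c'. c \<in> C \<Longrightarrow> c' \<in> C \<Longrightarrow> c \<noteq> c' \<Longrightarrow> J c \<inter> J c' = {}"
    and ae: "\<And>c. c \<in> C \<Longrightarrow> AE y in \<nu>. real q * real c + y \<in> J c"
    and c: "c \<in> C"
  shows "AE y in \<nu>. lift J q C a f (real q * real c + y) = a c * f y"
  using ae[OF c]
proof (rule AE_mp, intro AE_I2 impI)
  fix y assume y: "real q * real c + y \<in> J c"
  have "lift J q C a f (real q * real c + y)
      = (\<Sum>c'\<in>C. if c' = c then a c * f y else 0)"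
    unfolding lift_def
  proof (intro sum.cong refl)
    fix c' assume c': "c' \<in> C"
    show "indicator (J c') (real q * real c + y) *\<^sub>R (a c' * f (real q * real c + y - real q * real c'))
        = (if c' = c then a c * f y else 0)"
    proof (cases "c' = c")
      case True then show ?thesis using y by simp
    next
      case False
      then have "real q * real c + y \<notin> J c'" using disj[OF c c'] y by auto
      then show ?thesis using False by simp
    qed
  qed
  also have "\<dots> = a c * f y" using c fin by simp
  finally show "lift J q C a f (real q * real c + y) = a c * f y" .
qed

end


context cset
begin

lemma lift_L2:
  assumes J: "\<And>c. c \<in> C \<Longrightarrow> J c \<in> sets borel"
    and disj: "\<And>c c'. c \<in> C \<Longrightarrow> c' \<in> C \<Longrightarrow> c \<noteq> c' \<Longrightarrow> J c \<inter> J c' = {}"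
    and ae: "\<And>c. c \<in> C \<Longrightarrow> AE y in \<nu>. real q * real c + y \<in> J c"
    and f: "f \<in> L2 \<nu>"
  shows "lift J q C a f \<in> L2 mu"
proof -
  have fm: "f \<in> borel_measurable borel" using f by (simp add: L2_def)
  have fi: "integrable \<nu> (\<lambda>x. (cmod (f x))\<^sup>2)" using f by (simp add: L2_def)
  have Fm: "lift J q C a f \<in> borel_measurable borel" by (rule lift_meas[OF J fm])
  have "integrable mu (\<lambda>x. (cmod (lift J q C a f x))\<^sup>2)"
  proof (subst integrable_mu, goal_cases)
    case 1 show ?case using Fm by measurable
  next
    case 2 show ?case
    proof
      fix c assume c: "c \<in> C"
      have ae1: "AE y in \<nu>. lift J q C a f (real q * real c + y) = a c * f y"
        using J disj ae c by (rule lift_ae)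
      have "integrable \<nu> (\<lambda>y. (cmod (a c))\<^sup>2 * (cmod (f y))\<^sup>2)" using fi by auto
      moreover have "AE y in \<nu>. (cmod (lift J q C a f (real q * real c + y)))\<^sup>2 = (cmod (a c))\<^sup>2 * (cmod (f y))\<^sup>2"
        using ae1 by eventually_elim (simp add: norm_mult power_mult_distrib)
      moreover have "(\<lambda>y. (cmod (lift J q C a f (real q * real c + y)))\<^sup>2) \<in> borel_measurable \<nu>"
      proof -
        have "(\<lambda>y. real q * real c + y) \<in> borel_measurable borel" by simp
        then have "(\<lambda>y. lift J q C a f (real q * real c + y)) \<in> borel_measurable borel"
          using Fm by (rule measurable_compose)
        then show ?thesis by simp
      qed
      moreover have "(\<lambda>y. (cmod (a c))\<^sup>2 * (cmod (f y))\<^sup>2) \<in> borel_measurable \<nu>" using fm by simp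
      ultimately show "integrable \<nu> (\<lambda>y. (cmod (lift J q C a f (real q * real c + y)))\<^sup>2)"
        by (subst integrable_cong_AE) auto
    qed
  qed
  then show ?thesis using Fm by (simp add: L2_def)
qed

lemma lift_inner:
  assumes J: "\<And>c. c \<in> C \<Longrightarrow> J c \<in> sets borel"
    and disj: "\<And>c c'. c \<in> C \<Longrightarrow> c' \<in> C \<Longrightarrow> c \<noteq> c' \<Longrightarrow> J c \<inter> J c' = {}"
    and ae: "\<And>c. c \<in> C \<Longrightarrow> AE y in \<nu>. real q * real c + y \<in> J c"
    and f: "f \<in> L2 \<nu>"
  shows "inner_L2 mu (lift J q C a f) (expo l)
     = (\<Sum>c\<in>C. of_real (p c) * a c * cnj (expo l (real q * real c))) * inner_L2 \<nu> f (expo l)"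
proof -
  have fm: "f \<in> borel_measurable borel" using f by (simp add: L2_def)
  have Fm: "lift J q C a f \<in> borel_measurable borel" by (rule lift_meas[OF J fm])
  have FL: "lift J q C a f \<in> L2 mu" by (rule lift_L2[OF J disj ae f])
  have int: "integrable mu (\<lambda>x. lift J q C a f x * cnj (expo l x))"
    by (rule inner_integrable[OF fm_mu _ FL]) simp
  have "inner_L2 mu (lift J q C a f) (expo l) = (\<Sum>c\<in>C. p c *\<^sub>R (\<integral>y. lift J q C a f (real q * real c + y) * cnj (expo l (real q * real c + y)) \<partial>\<nu>))"
    unfolding inner_L2_def by (rule integral_mu[OF int])
  also have "\<dots> = (\<Sum>c\<in>C. p c *\<^sub>R ((a c * cnj (expo l (real q * real c))) * inner_L2 \<nu> f (expo l)))"
  proof (intro sum.cong refl arg_cong[where f="\<lambda>z. p _ *\<^sub>R z"])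
    fix c assume c: "c \<in> C"
    have m1: "(\<lambda>y. lift J q C a f (real q * real c + y) * cnj (expo l (real q * real c + y))) \<in> borel_measurable \<nu>"
    proof -
      have "(\<lambda>y. real q * real c + y) \<in> borel_measurable borel" by simp
      then have "(\<lambda>y. lift J q C a f (real q * real c + y)) \<in> borel_measurable borel"
        using Fm by (rule measurable_compose)
      then show ?thesis by (simp add: cnj_expo)
    qed
    have m2: "(\<lambda>y. (a c * cnj (expo l (real q * real c))) * (f y * cnj (expo l y))) \<in> borel_measurable \<nu>"
      using fm by (simp add: cnj_expo)
    have "(\<integral>y. lift J q C a f (real q * real c + y) * cnj (expo l (real q * real c + y)) \<partial>\<nu>)
       = (\<integral>y. (a c * cnj (expo l (real q * real c))) * (f y * cnj (expo l y)) \<partial>\<nu>)"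
    proof (rule integral_cong_AE[OF m1 m2])
      have ae1: "AE y in \<nu>. lift J q C a f (real q * real c + y) = a c * f y"
        using J disj ae c by (rule lift_ae)
      then show "AE y in \<nu>. lift J q C a f (real q * real c + y) * cnj (expo l (real q * real c + y)) =
          (a c * cnj (expo l (real q * real c))) * (f y * cnj (expo l y))"
        by eventually_elim (simp add: expo_add mult_ac)
    qed
    also have "\<dots> = (a c * cnj (expo l (real q * real c))) * inner_L2 \<nu> f (expo l)"
      unfolding inner_L2_def by (rule integral_mult_right_zero)
    finally show "(\<integral>y. lift J q C a f (real q * real c + y) * cnj (expo l (real q * real c + y)) \<partial>\<nu>)
       = (a c * cnj (expo l (real q * real c))) * inner_L2 \<nu> f (expo l)" .
  qed
  also have "\<dots> = (\<Sum>c\<in>C. of_real (p c) * a c * cnj (expo l (real q * real c))) * inner_L2 \<nu> f (expo l)"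
    by (simp add: sum_distrib_right scaleR_conv_of_real mult.assoc)
  finally show ?thesis .
qed

lemma lift_zero:
  assumes J: "\<And>c. c \<in> C \<Longrightarrow> J c \<in> sets borel"
    and disj: "\<And>c c'. c \<in> C \<Longrightarrow> c' \<in> C \<Longrightarrow> c \<noteq> c' \<Longrightarrow> J c \<inter> J c' = {}"
    and ae: "\<And>c. c \<in> C \<Longrightarrow> AE y in \<nu>. real q * real c + y \<in> J c"
    and fm: "f \<in> borel_measurable borel"
    and z: "AE x in mu. lift J q C a f x = 0" and c: "c \<in> C"
  shows "AE y in \<nu>. a c * f y = 0"
proof -
  have Fm: "lift J q C a f \<in> borel_measurable borel" by (rule lift_meas[OF J fm])
  have "{x. lift J q C a f x = 0} \<in> sets borel" using Fm by measurable
  from AE_mu_D[OF this z c]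
  have "AE y in \<nu>. lift J q C a f (real q * real c + y) = 0" .
  moreover have "AE y in \<nu>. lift J q C a f (real q * real c + y) = a c * f y"
    using J disj ae c by (rule lift_ae)
  ultimately show ?thesis by eventually_elim simp
qed

end


lemma ONB_shift:
  assumes fm: "finite_measure \<rho>" and s: "sets \<rho> = sets borel" and onb: "exp_ONB \<rho> \<Lambda>"
  shows "exp_ONB \<rho> ((\<lambda>l. l - t) ` \<Lambda>)"
  unfolding exp_ONB_def
proof (intro conjI ballI impI)
  fix a b assume a: "a \<in> (\<lambda>l. l - t) ` \<Lambda>" and b: "b \<in> (\<lambda>l. l - t) ` \<Lambda>"
  then obtain l l' where l: "l \<in> \<Lambda>" "a = l - t" and l': "l' \<in> \<Lambda>" "b = l' - t" by auto
  have "inner_L2 \<rho> (expo a) (expo b) = inner_L2 \<rho> (expo l) (expo l')"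
    using l l' by (simp add: inner_L2_expo)
  also have "\<dots> = (if l = l' then 1 else 0)" using onb l l' by (auto simp: exp_ONB_def)
  also have "\<dots> = (if a = b then 1 else 0)" using l l' by auto
  finally show "inner_L2 \<rho> (expo a) (expo b) = (if a = b then 1 else 0)" .
next
  fix f assume f: "f \<in> L2 \<rho>" and orth: "\<forall>a\<in>(\<lambda>l. l - t) ` \<Lambda>. inner_L2 \<rho> f (expo a) = 0"
  define g where "g x = f x * expo t x" for x
  have gL: "g \<in> L2 \<rho>" unfolding g_def
    by (rule L2_mult_bounded[OF f, where K=1]) (auto simp: measurable_cong_sets[OF s refl])
  have "inner_L2 \<rho> g (expo l) = 0" if l: "l \<in> \<Lambda>" for l
  proof -
    have "inner_L2 \<rho> g (expo l) = inner_L2 \<rho> f (expo (l - t))"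
      unfolding inner_L2_def g_def
      by (intro Bochner_Integration.integral_cong refl) (simp add: cnj_expo expo_add_freq[symmetric] mult.assoc
          flip: expo_add_freq)
    also have "\<dots> = 0" using orth l by auto
    finally show ?thesis .
  qed
  then have "AE x in \<rho>. g x = 0" using onb gL by (auto simp: exp_ONB_def)
  then show "AE x in \<rho>. f x = 0" by eventually_elim (simp add: g_def)
qed

context cset
begin

definition rel :: "real \<Rightarrow> real \<Rightarrow> bool" where "rel l l' \<longleftrightarrow> real q * (l - l') \<in> \<int>"

lemma rel_refl: "rel l l" by (simp add: rel_def)
lemma rel_sym: "rel l l' \<Longrightarrow> rel l' l"
proof -
  assume "rel l l'"
  then have "- (real q * (l - l')) \<in> \<int>" unfolding rel_def by (rule Ints_minus)
  then show ?thesis by (simp add: rel_def algebra_simps)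
qed
lemma rel_trans: "rel l l' \<Longrightarrow> rel l' l'' \<Longrightarrow> rel l l''"
proof -
  assume "rel l l'" "rel l' l''"
  then have "real q * (l - l') + real q * (l' - l'') \<in> \<int>" unfolding rel_def by (rule Ints_add)
  then show ?thesis by (simp add: rel_def algebra_simps)
qed

lemma C_ne: "C \<noteq> {}" using psum by auto

lemma L_ne:
  assumes onb: "exp_ONB mu \<Lambda>" shows "\<Lambda> \<noteq> {}"
proof
  assume e: "\<Lambda> = {}"
  have c1: "(\<lambda>x. 1::complex) \<in> L2 mu" by (rule L2_const[OF fm_mu])
  have h: "\<forall>f\<in>L2 mu. AE x in mu. f x = 0" using onb e by (simp add: exp_ONB_def)
  have "AE x in mu. (1::complex) = 0" using bspec[OF h c1] by simp
  then show False using prob_space.AE_const[OF prob_mu] by simp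
qed

lemma ortho_mu:
  assumes onb: "exp_ONB mu \<Lambda>" and l: "l \<in> \<Lambda>" "l' \<in> \<Lambda>" "l \<noteq> l'"
  shows "Ef C p q (l - l') * fourier_measure \<nu> (l - l') = 0"
  using onb l by (auto simp: exp_ONB_def inner_mu_expo[symmetric])

lemma same_class:
  assumes onb: "exp_ONB mu \<Lambda>" and l: "l \<in> \<Lambda>" "l' \<in> \<Lambda>" "l \<noteq> l'" and r: "rel l l'"
  shows "fourier_measure \<nu> (l - l') = 0"
  using ortho_mu[OF onb l] Ef_int[of "l - l'"] r by (simp add: rel_def)

lemma diff_class:
  assumes zero: "\<forall>\<xi>\<in>zero_set \<nu>. real q * \<xi> \<in> \<int>"
    and onb: "exp_ONB mu \<Lambda>" and l: "l \<in> \<Lambda>" "l' \<in> \<Lambda>" and r: "\<not> rel l l'"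
  shows "Ef C p q (l - l') = 0"
proof -
  have "l \<noteq> l'" using r rel_refl by auto
  moreover have "fourier_measure \<nu> (l - l') \<noteq> 0"
    using zero r by (auto simp: zero_set_def rel_def)
  ultimately show ?thesis using ortho_mu[OF onb l] by simp
qed

lemma nu_spectral_from:
  assumes zero: "\<forall>\<xi>\<in>zero_set \<nu>. real q * \<xi> \<in> \<int>"
    and J: "\<And>c. c \<in> C \<Longrightarrow> J c \<in> sets borel"
    and disj: "\<And>c c'. c \<in> C \<Longrightarrow> c' \<in> C \<Longrightarrow> c \<noteq> c' \<Longrightarrow> J c \<inter> J c' = {}"
    and ae: "\<And>c. c \<in> C \<Longrightarrow> AE y in \<nu>. real q * real c + y \<in> J c"
    and cL: "countable \<Lambda>" and onb: "exp_ONB mu \<Lambda>"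
  shows "spectral_measure \<nu>"
proof -
  obtain l0 where l0: "l0 \<in> \<Lambda>" using L_ne[OF onb] by auto
  define L0 where "L0 = {l \<in> \<Lambda>. rel l l0}"
  have "exp_ONB \<nu> L0"
    unfolding exp_ONB_def
  proof (intro conjI ballI impI)
    fix l l' assume l: "l \<in> L0" and l': "l' \<in> L0"
    show "inner_L2 \<nu> (expo l) (expo l') = (if l = l' then 1 else 0)"
    proof (cases "l = l'")
      case True then show ?thesis by (simp add: inner_L2_expo fourier_nu_0)
    next
      case False
      have r1: "rel l l0" "rel l' l0" using l l' by (auto simp: L0_def)
      have "rel l l'" by (rule rel_trans[OF r1(1) rel_sym[OF r1(2)]])
      then show ?thesis using same_class[OF onb _ _ False] l l' False
        by (auto simp: L0_def inner_L2_expo)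
    qed
  next
    fix f assume f: "f \<in> L2 \<nu>" and orth: "\<forall>l\<in>L0. inner_L2 \<nu> f (expo l) = 0"
    have fm: "f \<in> borel_measurable borel" using f by (simp add: L2_def)
    define a where "a c = expo l0 (real q * real c)" for c
    define F where "F = lift J q C a f"
    have FL: "F \<in> L2 mu" unfolding F_def by (rule lift_L2[OF J disj ae f])
    have "inner_L2 mu F (expo l) = 0" if l: "l \<in> \<Lambda>" for l
    proof -
      have "inner_L2 mu F (expo l) = (\<Sum>c\<in>C. of_real (p c) * a c * cnj (expo l (real q * real c))) * inner_L2 \<nu> f (expo l)"
        unfolding F_def by (rule lift_inner[OF J disj ae f])
      also have "(\<Sum>c\<in>C. of_real (p c) * a c * cnj (expo l (real q * real c))) = Ef C p q (l0 - l)"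
        unfolding Ef_def a_def by (intro sum.cong refl) (simp add: mult.assoc expo_mult_cnj)
      finally have eq: "inner_L2 mu F (expo l) = Ef C p q (l0 - l) * inner_L2 \<nu> f (expo l)" .
      show ?thesis
      proof (cases "rel l l0")
        case True
        then have "inner_L2 \<nu> f (expo l) = 0" using orth l by (auto simp: L0_def)
        then show ?thesis using eq by simp
      next
        case False
        then have "\<not> rel l0 l" using rel_sym by blast
        then have "Ef C p q (l0 - l) = 0" by (rule diff_class[OF zero onb l0 l])
        then show ?thesis using eq by simp
      qed
    qed
    then have "AE x in mu. F x = 0" using onb FL by (auto simp: exp_ONB_def)
    moreover obtain c where c: "c \<in> C" using C_ne by auto
    ultimately have "AE y in \<nu>. a c * f y = 0"
      unfolding F_def by (intro lift_zero[OF J disj ae fm]) auto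
    then show "AE x in \<nu>. f x = 0" by eventually_elim (simp add: a_def)
  qed
  moreover have "countable L0" using cL by (rule countable_subset[rotated]) (auto simp: L0_def)
  ultimately show ?thesis by (auto simp: spectral_measure_def)
qed

end


context cset
begin

lemma eta_Ef: "fourier_measure eta (real q * \<xi>) = Ef C p q \<xi>"
  unfolding fourier_measure_def Ef_def
  by (subst integral_disc[OF fin pnn]) (auto simp: scaleR_conv_of_real expo_def mult_ac intro!: sum.cong)

lemma inner_eta:
  assumes "g \<in> borel_measurable borel"
  shows "inner_L2 eta g (expo l) = (\<Sum>c\<in>C. of_real (p c) * g (real c) * cnj (expo l (real c)))"
  by (rule inner_disc[OF fin pnn assms])

lemma eta_spectral_from:
  assumes zero: "\<forall>\<xi>\<in>zero_set \<nu>. real q * \<xi> \<in> \<int>"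
    and J: "\<And>c. c \<in> C \<Longrightarrow> J c \<in> sets borel"
    and disj: "\<And>c c'. c \<in> C \<Longrightarrow> c' \<in> C \<Longrightarrow> c \<noteq> c' \<Longrightarrow> J c \<inter> J c' = {}"
    and ae: "\<And>c. c \<in> C \<Longrightarrow> AE y in \<nu>. real q * real c + y \<in> J c"
    and cL: "countable \<Lambda>" and onb: "exp_ONB mu \<Lambda>"
  shows "spectral_measure eta"
proof -
  define rep where "rep l = (SOME l'. l' \<in> \<Lambda> \<and> rel l l')" for l
  have rep_in: "rep l \<in> \<Lambda> \<and> rel l (rep l)" if "l \<in> \<Lambda>" for l
    unfolding rep_def by (rule someI_ex) (use that rel_refl in blast)
  have rep_eq: "rep l = rep l''" if "rel l l''" for l l''
  proof -
    have "(\<lambda>l'. l' \<in> \<Lambda> \<and> rel l l') = (\<lambda>l'. l' \<in> \<Lambda> \<and> rel l'' l')"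
      using that rel_sym rel_trans by (intro ext) (meson)
    then show ?thesis unfolding rep_def by simp
  qed
  have qpos: "real q > 0" using q1 by simp
  define Le where "Le = (\<lambda>l. real q * rep l) ` \<Lambda>"
  have "exp_ONB eta Le"
    unfolding exp_ONB_def
  proof (intro conjI ballI impI)
    fix a b assume a: "a \<in> Le" and b: "b \<in> Le"
    then obtain l l' where l: "l \<in> \<Lambda>" "a = real q * rep l" and l': "l' \<in> \<Lambda>" "b = real q * rep l'"
      by (auto simp: Le_def)
    have "inner_L2 eta (expo a) (expo b) = fourier_measure eta (real q * (rep l - rep l'))"
      using l l' by (simp add: inner_L2_expo right_diff_distrib)
    also have "\<dots> = Ef C p q (rep l - rep l')" by (rule eta_Ef)
    finally have eq: "inner_L2 eta (expo a) (expo b) = Ef C p q (rep l - rep l')" .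
    show "inner_L2 eta (expo a) (expo b) = (if a = b then 1 else 0)"
    proof (cases "a = b")
      case True
      then have "rep l = rep l'" using l l' qpos by simp
      then show ?thesis using eq True by (simp add: Ef_int)
    next
      case False
      then have ne: "rep l \<noteq> rep l'" using l l' by auto
      have "\<not> rel (rep l) (rep l')"
      proof
        assume "rel (rep l) (rep l')"
        then have "rep (rep l) = rep (rep l')" by (rule rep_eq)
        moreover have "rep l = rep (rep l)" using rep_in[OF l(1)] rep_eq by blast
        moreover have "rep l' = rep (rep l')" using rep_in[OF l'(1)] rep_eq by blast
        ultimately show False using ne by simp
      qed
      then have "Ef C p q (rep l - rep l') = 0"
        using diff_class[OF zero onb] rep_in[OF l(1)] rep_in[OF l'(1)] by blast
      then show ?thesis using eq False by simp
    qed
  next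
    fix g assume g: "g \<in> L2 eta" and orth: "\<forall>a\<in>Le. inner_L2 eta g (expo a) = 0"
    have gm: "g \<in> borel_measurable borel" using g by (simp add: L2_def)
    define F where "F = lift J q C (\<lambda>c. g (real c)) (\<lambda>_. 1)"
    have one: "(\<lambda>_. 1::complex) \<in> L2 \<nu>" by (rule L2_const[OF fm_nu])
    have FL: "F \<in> L2 mu" unfolding F_def by (rule lift_L2[OF J disj ae one])
    have "inner_L2 mu F (expo l) = 0" if l: "l \<in> \<Lambda>" for l
    proof -
      have "inner_L2 mu F (expo l) = (\<Sum>c\<in>C. of_real (p c) * g (real c) * cnj (expo l (real q * real c))) * inner_L2 \<nu> (\<lambda>_. 1) (expo l)"
        unfolding F_def by (rule lift_inner[OF J disj ae one])
      also have "(\<Sum>c\<in>C. of_real (p c) * g (real c) * cnj (expo l (real q * real c)))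
          = inner_L2 eta g (expo (real q * rep l))"
        unfolding inner_eta[OF gm]
      proof (intro sum.cong refl)
        fix c
        have r: "rel l (rep l)" using rep_in[OF l] by simp
        have "expo l (real q * real c) = expo (rep l) (real q * real c) * expo (l - rep l) (real q * real c)"
          by (simp flip: expo_add_freq)
        also have "expo (l - rep l) (real q * real c) = 1"
        proof (rule expo_int)
          have "(l - rep l) * (real q * real c) = (real q * (l - rep l)) * real c" by simp
          also have "\<dots> \<in> \<int>" by (rule Ints_mult[OF r[unfolded rel_def]]) simp
          finally show "(l - rep l) * (real q * real c) \<in> \<int>" .
        qed
        also have "expo (rep l) (real q * real c) = expo (real q * rep l) (real c)"
          by (simp add: expo_def mult_ac)
        finally have "expo l (real q * real c) = expo (real q * rep l) (real c)" by simp
        then show "of_real (p c) * g (real c) * cnj (expo l (real q * real c)) =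
            of_real (p c) * g (real c) * cnj (expo (real q * rep l) (real c))" by simp
      qed
      also have "\<dots> = 0" using orth l by (auto simp: Le_def)
      finally show ?thesis by simp
    qed
    then have z: "AE x in mu. F x = 0" using onb FL by (auto simp: exp_ONB_def)
    have "g (real c) = 0" if c: "c \<in> C" for c
    proof -
      have "AE y in \<nu>. g (real c) * 1 = 0"
        using z c unfolding F_def by (intro lift_zero[OF J disj ae]) auto
      then show ?thesis using prob_space.AE_const[OF prob_nu] by simp
    qed
    then show "AE x in eta. g x = 0" using fin by (intro AE_disc) auto
  qed
  moreover have "countable Le" unfolding Le_def using cL by simp
  ultimately show ?thesis by (auto simp: spectral_measure_def)
qed

end


lemma ONB_ne:
  assumes ps: "prob_space \<rho>" and onb: "exp_ONB \<rho> \<Lambda>" shows "\<Lambda> \<noteq> {}"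
proof
  assume e: "\<Lambda> = {}"
  have fm: "finite_measure \<rho>" using ps by (simp add: prob_space_def)
  have c1: "(\<lambda>x. 1::complex) \<in> L2 \<rho>" by (rule L2_const[OF fm])
  have h: "\<forall>f\<in>L2 \<rho>. AE x in \<rho>. f x = 0" using onb e by (simp add: exp_ONB_def)
  have "AE x in \<rho>. (1::complex) = 0" using bspec[OF h c1] by simp
  then show False using prob_space.AE_const[OF ps] by simp
qed

context cset
begin

lemma eta_periodic:
  assumes k: "k \<in> \<int>"
  shows "fourier_measure eta (x + k) = fourier_measure eta x"
  unfolding fourier_measure_def
proof (subst (1 2) integral_disc[OF fin pnn], simp, simp, intro sum.cong refl)
  fix c
  have "expo k (real c) = 1" by (rule expo_int) (use k in simp)
  then show "p c *\<^sub>R expo (x + k) (real c) = p c *\<^sub>R expo x (real c)"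
    by (simp add: expo_add_freq)
qed

lemma backward:
  assumes zero: "\<forall>\<xi>\<in>zero_set \<nu>. real q * \<xi> \<in> \<int>"
    and se: "spectral_measure eta" and sn: "spectral_measure \<nu>"
  shows "spectral_measure mu"
proof -
  obtain Le where cLe: "countable Le" and oe: "exp_ONB eta Le" using se by (auto simp: spectral_measure_def)
  obtain Ln0 where cLn0: "countable Ln0" and on0: "exp_ONB \<nu> Ln0" using sn by (auto simp: spectral_measure_def)
  obtain b0 where b0: "b0 \<in> Ln0" using ONB_ne[OF prob_nu on0] by auto
  define Ln where "Ln = (\<lambda>l. l - b0) ` Ln0"
  have cLn: "countable Ln" unfolding Ln_def using cLn0 by simp
  have on: "exp_ONB \<nu> Ln" unfolding Ln_def by (rule ONB_shift[OF fm_nu sets_nu on0])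
  have zLn: "0 \<in> Ln" using b0 unfolding Ln_def by force
  have qb: "real q * b \<in> \<int>" if b: "b \<in> Ln" for b
  proof (cases "b = 0")
    case True then show ?thesis by simp
  next
    case False
    have "inner_L2 \<nu> (expo b) (expo 0) = 0" using on b zLn False by (auto simp: exp_ONB_def)
    then have "b \<in> zero_set \<nu>" by (simp add: inner_L2_expo zero_set_def)
    then show ?thesis using zero by auto
  qed
  have qpos: "real q > 0" using q1 by simp
  define L where "L = (\<lambda>(a, b). a / real q + b) ` (Le \<times> Ln)"
  have cL: "countable L" unfolding L_def using cLe cLn by simp
  have Ef_eq: "Ef C p q (a / real q + b - (a' / real q + b')) = inner_L2 eta (expo a) (expo a')"
    if "b \<in> Ln" "b' \<in> Ln" for a a' b b'
  proof -
    have k: "real q * b - real q * b' \<in> \<int>" using qb that by (intro Ints_diff) auto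
    have "Ef C p q (a / real q + b - (a' / real q + b')) = fourier_measure eta (real q * (a / real q + b - (a' / real q + b')))"
      by (rule eta_Ef[symmetric])
    also have "real q * (a / real q + b - (a' / real q + b')) = (a - a') + (real q * b - real q * b')"
      using qpos by (simp add: field_simps)
    also have "fourier_measure eta \<dots> = fourier_measure eta (a - a')" by (rule eta_periodic[OF k])
    finally show ?thesis by (simp add: inner_L2_expo)
  qed
  have "exp_ONB mu L"
    unfolding exp_ONB_def
  proof (intro conjI ballI impI)
    fix l l' assume l: "l \<in> L" and l': "l' \<in> L"
    then obtain a b a' b' where ab: "a \<in> Le" "b \<in> Ln" "l = a / real q + b"
      and ab': "a' \<in> Le" "b' \<in> Ln" "l' = a' / real q + b'" by (auto simp: L_def)
    have eq: "inner_L2 mu (expo l) (expo l') = inner_L2 eta (expo a) (expo a') * fourier_measure \<nu> (l - l')"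
      using Ef_eq[OF ab(2) ab'(2), of a a'] ab ab' by (simp add: inner_mu_expo)
    show "inner_L2 mu (expo l) (expo l') = (if l = l' then 1 else 0)"
    proof (cases "l = l'")
      case True
      then show ?thesis by (simp add: inner_mu_expo Ef_int fourier_nu_0)
    next
      case False
      show ?thesis
      proof (cases "a = a'")
        case True
        then have "b \<noteq> b'" using False ab ab' by auto
        then have "inner_L2 \<nu> (expo b) (expo b') = 0" using on ab ab' by (auto simp: exp_ONB_def)
        moreover have "l - l' = b - b'" using ab ab' True by simp
        ultimately show ?thesis using eq False by (simp add: inner_L2_expo)
      next
        case ne: False
        then have "inner_L2 eta (expo a) (expo a') = 0" using oe ab ab' by (auto simp: exp_ONB_def)
        then show ?thesis using eq False by simp
      qed
    qed
  next
    fix f assume f: "f \<in> L2 mu" and orth: "\<forall>l\<in>L. inner_L2 mu f (expo l) = 0"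
    have fm: "f \<in> borel_measurable borel" using f by (simp add: L2_def)
    have f2: "integrable mu (\<lambda>x. (cmod (f x))\<^sup>2)" using f by (simp add: L2_def)
    have fcm: "(\<lambda>y. f (real q * real c + y)) \<in> borel_measurable borel" for c
    proof -
      have "(\<lambda>y. real q * real c + y) \<in> borel_measurable borel" by simp
      then show ?thesis using fm by (rule measurable_compose)
    qed
    have fc: "(\<lambda>y. f (real q * real c + y)) \<in> L2 \<nu>" if c: "c \<in> C" for c
    proof -
      have "\<forall>c\<in>C. integrable \<nu> (\<lambda>y. (cmod (f (real q * real c + y)))\<^sup>2)"
        using f2 integrable_mu[of "\<lambda>x. (cmod (f x))\<^sup>2"] fm by simp
      then show ?thesis using c fcm by (simp add: L2_def)
    qed
    define K where "K a c = of_real (p c) * cnj (expo a (real c))" for a c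
    define G where "G a y = (\<Sum>c\<in>C. K a c * f (real q * real c + y)) * cnj (expo (a / real q) y)" for a y
    have GL: "G a \<in> L2 \<nu>" for a
      unfolding G_def
      by (rule L2_mult_bounded[where K=1], rule L2_sum, rule L2_cmult, rule fc) (auto simp: cnj_expo)
    have innerG: "inner_L2 \<nu> (G a) (expo b) = inner_L2 mu f (expo (a / real q + b))"
      if a: "a \<in> Le" and b: "b \<in> Ln" for a b
    proof -
      define l where "l = a / real q + b"
      define h where "h c y = f (real q * real c + y) * (cnj (expo (a / real q) y) * cnj (expo b y))" for c y
      have hi: "integrable \<nu> (h c)" if c: "c \<in> C" for c
      proof -
        have "h c \<in> L2 \<nu>" unfolding h_def
          by (rule L2_mult_bounded[where K=1, OF fc[OF c]]) (auto simp: cnj_expo norm_mult)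
        then show ?thesis using L2_integrable fm_nu by blast
      qed
      have e1: "G a y * cnj (expo b y) = (\<Sum>c\<in>C. K a c * h c y)" for y
        unfolding G_def h_def sum_distrib_right by (rule sum.cong[OF refl]) (simp add: mult_ac)
      have el: "expo l (real q * real c) = expo a (real c)" for c
      proof -
        have "expo l (real q * real c) = expo (a / real q) (real q * real c) * expo b (real q * real c)"
          unfolding l_def by (rule expo_add_freq)
        also have "expo b (real q * real c) = 1"
        proof (rule expo_int)
          have "b * (real q * real c) = (real q * b) * real c" by simp
          also have "\<dots> \<in> \<int>" by (rule Ints_mult[OF qb[OF b]]) simp
          finally show "b * (real q * real c) \<in> \<int>" .
        qed
        also have "expo (a / real q) (real q * real c) = expo a (real c)"
          using qpos by (simp add: expo_def mult_ac)
        finally show ?thesis by simp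
      qed
      have e2: "f (real q * real c + y) * cnj (expo l (real q * real c + y)) = cnj (expo a (real c)) * h c y" for c y
      proof -
        have ely: "expo l y = expo (a / real q) y * expo b y" unfolding l_def by (rule expo_add_freq)
        show ?thesis unfolding h_def expo_add el ely by (simp add: mult_ac)
      qed
      have "inner_L2 \<nu> (G a) (expo b) = (\<integral>y. (\<Sum>c\<in>C. K a c * h c y) \<partial>\<nu>)"
        unfolding inner_L2_def e1 ..
      also have "\<dots> = (\<Sum>c\<in>C. (\<integral>y. K a c * h c y \<partial>\<nu>))"
        by (rule Bochner_Integration.integral_sum) (use hi in auto)
      also have "\<dots> = (\<Sum>c\<in>C. K a c * (\<integral>y. h c y \<partial>\<nu>))"
        by (simp only: integral_mult_right_zero)
      also have "\<dots> = (\<Sum>c\<in>C. p c *\<^sub>R (\<integral>y. f (real q * real c + y) * cnj (expo l (real q * real c + y)) \<partial>\<nu>))"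
        unfolding e2 K_def by (simp add: integral_mult_right_zero scaleR_conv_of_real mult.assoc)
      also have "\<dots> = inner_L2 mu f (expo l)"
        unfolding inner_L2_def
        by (rule integral_mu[symmetric], rule inner_integrable[OF fm_mu _ f]) simp
      finally show ?thesis by (simp add: l_def)
    qed
    have AEG: "AE y in \<nu>. G a y = 0" if a: "a \<in> Le" for a
    proof -
      have "\<forall>b\<in>Ln. inner_L2 \<nu> (G a) (expo b) = 0"
      proof
        fix b assume b: "b \<in> Ln"
        have "a / real q + b \<in> L" using a b by (force simp: L_def)
        then show "inner_L2 \<nu> (G a) (expo b) = 0" using innerG[OF a b] orth by simp
      qed
      then show ?thesis using on GL by (auto simp: exp_ONB_def)
    qed
    have AEall: "AE y in \<nu>. \<forall>a\<in>Le. G a y = 0"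
      by (rule AE_ball_countable'[OF AEG cLe])
    have pt: "f (real q * real c + y) = 0" if y: "\<forall>a\<in>Le. G a y = 0" and c: "c \<in> C" for y c
    proof -
      define gy where "gy x = f (real q * x + y)" for x
      have gym: "gy \<in> borel_measurable borel"
      proof -
        have "(\<lambda>x. real q * x + y) \<in> borel_measurable borel" by simp
        then show ?thesis unfolding gy_def using fm by (rule measurable_compose)
      qed
      have gyL: "gy \<in> L2 eta" by (rule L2_disc[OF fin pnn gym])
      have "inner_L2 eta gy (expo a) = 0" if a: "a \<in> Le" for a
      proof -
        have "G a y = 0" using y a by blast
        then have s0: "(\<Sum>c\<in>C. K a c * f (real q * real c + y)) = 0" by (simp add: G_def)
        have "inner_L2 eta gy (expo a) = (\<Sum>c\<in>C. K a c * f (real q * real c + y))"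
          unfolding inner_eta[OF gym] K_def gy_def by (simp add: mult_ac)
        then show ?thesis using s0 by simp
      qed
      then have "AE x in eta. gy x = 0" using oe gyL by (auto simp: exp_ONB_def)
      from AE_disc_D[OF fin this c ppos[OF c]] show ?thesis by (simp add: gy_def)
    qed
    have "\<forall>c\<in>C. AE y in \<nu>. f (real q * real c + y) = 0"
    proof
      fix c assume c: "c \<in> C"
      from AEall show "AE y in \<nu>. f (real q * real c + y) = 0"
        by eventually_elim (rule pt[OF _ c])
    qed
    moreover have "{x. f x = 0} \<in> sets borel" using fm by measurable
    ultimately show "AE x in mu. f x = 0" by (intro AE_mu) auto
  qed
  then show ?thesis using cL by (auto simp: spectral_measure_def)
qed

end


lemma AE_atom:
  assumes "AE x in \<rho>. P x" "emeasure \<rho> {s} > 0" "{s} \<in> sets \<rho>"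
  shows "P s"
proof (rule ccontr)
  assume np: "\<not> P s"
  obtain N where N: "{x \<in> space \<rho>. \<not> P x} \<subseteq> N" "emeasure \<rho> N = 0" "N \<in> sets \<rho>"
    using assms(1) by (rule AE_E)
  have "s \<in> space \<rho>" using assms(3) sets.sets_into_space by blast
  then have "{s} \<subseteq> N" using N np by auto
  then have "emeasure \<rho> {s} \<le> emeasure \<rho> N" using N by (intro emeasure_mono) auto
  then show False using N assms(2) by simp
qed

lemma finsupp_repr:
  fixes \<phi> :: "real \<Rightarrow> 'a::real_vector"
  assumes "finite S" "\<And>x. x \<notin> S \<Longrightarrow> \<phi> x = 0"
  shows "\<phi> x = (\<Sum>s\<in>S. indicator {s} x *\<^sub>R \<phi> s)"
proof (cases "x \<in> S")
  case True
  then have "(\<Sum>s\<in>S. indicator {s} x *\<^sub>R \<phi> s) = (\<Sum>s\<in>S. if s = x then \<phi> x else 0)"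
    by (intro sum.cong) (auto simp: indicator_def)
  also have "\<dots> = \<phi> x" using True assms(1) by simp
  finally show ?thesis by simp
next
  case False
  then have "(\<Sum>s\<in>S. indicator {s} x *\<^sub>R \<phi> s) = 0"
    by (intro sum.neutral) (auto simp: indicator_def)
  then show ?thesis using False assms(2) by simp
qed

lemma finsupp_meas:
  fixes \<phi> :: "real \<Rightarrow> complex"
  assumes "finite S" "\<And>x. x \<notin> S \<Longrightarrow> \<phi> x = 0"
  shows "\<phi> \<in> borel_measurable borel"
proof -
  have "(\<lambda>x. \<Sum>s\<in>S. indicator {s} x *\<^sub>R \<phi> s) \<in> borel_measurable borel" by measurable
  moreover have "\<phi> = (\<lambda>x. \<Sum>s\<in>S. indicator {s} x *\<^sub>R \<phi> s)"
  proof
    fix x show "\<phi> x = (\<Sum>s\<in>S. indicator {s} x *\<^sub>R \<phi> s)" by (rule finsupp_repr) (use assms in auto)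
  qed
  ultimately show ?thesis by simp
qed

lemma finsupp_L2:
  fixes \<phi> :: "real \<Rightarrow> complex"
  assumes fm: "finite_measure \<rho>" and s: "sets \<rho> = sets borel" and S: "finite S" "\<And>x. x \<notin> S \<Longrightarrow> \<phi> x = 0"
  shows "\<phi> \<in> L2 \<rho>"
proof -
  have "(\<lambda>x. \<Sum>s\<in>S. \<phi> s * of_real (indicator {s} x)) \<in> L2 \<rho>"
  proof (rule L2_sum)
    fix s assume "s \<in> S"
    show "(\<lambda>x. \<phi> s * of_real (indicator {s} x)) \<in> L2 \<rho>"
      by (rule L2_mult_bounded[OF L2_const[OF fm], where K=1])
        (auto simp: measurable_cong_sets[OF s refl] indicator_def)
  qed
  moreover have "\<phi> = (\<lambda>x. \<Sum>s\<in>S. \<phi> s * of_real (indicator {s} x))"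
  proof
    fix x have "\<phi> x = (\<Sum>s\<in>S. indicator {s} x *\<^sub>R \<phi> s)" by (rule finsupp_repr) (use S in auto)
    then show "\<phi> x = (\<Sum>s\<in>S. \<phi> s * of_real (indicator {s} x))" by (simp add: scaleR_conv_of_real mult.commute)
  qed
  ultimately show ?thesis by simp
qed

lemma finsupp_integral:
  fixes \<phi> :: "real \<Rightarrow> complex"
  assumes fm: "finite_measure \<rho>" and s: "sets \<rho> = sets borel" and S: "finite S" "\<And>x. x \<notin> S \<Longrightarrow> \<phi> x = 0"
  shows "integral\<^sup>L \<rho> \<phi> = (\<Sum>s\<in>S. measure \<rho> {s} *\<^sub>R \<phi> s)"
proof -
  interpret finite_measure \<rho> by fact
  have "integral\<^sup>L \<rho> \<phi> = integral\<^sup>L \<rho> (\<lambda>x. \<Sum>s\<in>S. indicator {s} x *\<^sub>R \<phi> s)"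
  proof (intro Bochner_Integration.integral_cong refl)
    fix x show "\<phi> x = (\<Sum>s\<in>S. indicator {s} x *\<^sub>R \<phi> s)" by (rule finsupp_repr) (use S in auto)
  qed
  also have "\<dots> = (\<Sum>s\<in>S. integral\<^sup>L \<rho> (\<lambda>x. indicator {s} x *\<^sub>R \<phi> s))"
    by (rule Bochner_Integration.integral_sum)
      (auto simp: s less_top[symmetric] emeasure_finite intro!: integrable_scaleR_left integrable_real_indicator)
  also have "\<dots> = (\<Sum>s\<in>S. measure \<rho> {s} *\<^sub>R \<phi> s)"
    by (intro sum.cong refl) (simp add: s integrable_real_indicator less_top[symmetric] emeasure_finite)
  finally show ?thesis .
qed

context cset
begin

lemma AE_atom_nu:
  assumes "AE x in \<nu>. P x" "emeasure \<nu> {s} > 0" shows "P s"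
  using AE_atom[OF assms] by (simp add: sets_nu)

lemma caseD_nu:
  assumes zero: "\<forall>\<xi>\<in>zero_set \<nu>. real q * \<xi> \<in> \<int>" and q: "q = 1"
    and m0: "emeasure \<nu> {0} > 0" and m1: "emeasure \<nu> {1} > 0"
  shows "\<not> spectral_measure \<nu>"
proof
  assume "spectral_measure \<nu>"
  then obtain \<Lambda> where onb: "exp_ONB \<nu> \<Lambda>" by (auto simp: spectral_measure_def)
  obtain b0 where b0: "b0 \<in> \<Lambda>" using ONB_ne[OF prob_nu onb] by auto
  interpret N: prob_space \<nu> by (rule prob_nu)
  define a0 where "a0 = measure \<nu> {0}"
  define a1 where "a1 = measure \<nu> {1}"
  have a0: "a0 > 0" using m0 unfolding a0_def by (simp add: N.emeasure_eq_measure)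
  have a1: "a1 > 0" using m1 unfolding a1_def by (simp add: N.emeasure_eq_measure)
  define u where "u = of_real a1 * cnj (expo b0 1)"
  define v :: complex where "v = - of_real a0"
  define f where "f x = (if x = 0 then u else if x = 1 then v else 0)" for x :: real
  have fS: "\<And>x. x \<notin> {0, 1} \<Longrightarrow> f x = 0" by (simp add: f_def)
  have fL: "f \<in> L2 \<nu>" by (rule finsupp_L2[OF fm_nu sets_nu _ fS, of "{0, 1}"]) simp
  have "inner_L2 \<nu> f (expo b) = 0" if b: "b \<in> \<Lambda>" for b
  proof -
    have bi: "b - b0 \<in> \<int>"
    proof (cases "b = b0")
      case True then show ?thesis by simp
    next
      case False
      then have "inner_L2 \<nu> (expo b) (expo b0) = 0" using onb b b0 by (auto simp: exp_ONB_def)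
      then have "b - b0 \<in> zero_set \<nu>" by (simp add: inner_L2_expo zero_set_def)
      then show ?thesis using zero q by auto
    qed
    have e1: "expo b 1 = expo b0 1"
    proof -
      have "expo b 1 = expo b0 1 * expo (b - b0) 1" by (simp flip: expo_add_freq)
      also have "expo (b - b0) 1 = 1" by (rule expo_int) (use bi in simp)
      finally show ?thesis by simp
    qed
    have "inner_L2 \<nu> f (expo b) = (\<Sum>s\<in>{0, 1}. measure \<nu> {s} *\<^sub>R (f s * cnj (expo b s)))"
      unfolding inner_L2_def by (rule finsupp_integral[OF fm_nu sets_nu]) (auto simp: f_def)
    also have "\<dots> = a0 *\<^sub>R u + a1 *\<^sub>R (v * cnj (expo b 1))"
      by (simp add: f_def a0_def a1_def)
    also have "\<dots> = 0" by (simp add: u_def v_def e1 scaleR_conv_of_real)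
    finally show ?thesis .
  qed
  then have "AE x in \<nu>. f x = 0" using onb fL by (auto simp: exp_ONB_def)
  then have "f 1 = 0" using m1 by (rule AE_atom_nu)
  then show False using a0 by (simp add: f_def v_def)
qed

end


lemma sum_indicator_pick:
  fixes w :: "real \<Rightarrow> 'a::real_vector"
  assumes "finite S" "t \<in> S"
  shows "(\<Sum>s\<in>S. indicator {t} s *\<^sub>R w s) = w t"
proof -
  have "(\<Sum>s\<in>S. indicator {t} s *\<^sub>R w s) = (\<Sum>s\<in>S. if s = t then w t else 0)"
    by (intro sum.cong) (auto simp: indicator_def)
  also have "\<dots> = w t" using assms by simp
  finally show ?thesis .
qed

context cset
begin

lemma caseD_mu:
  assumes zero: "\<forall>\<xi>\<in>zero_set \<nu>. real q * \<xi> \<in> \<int>" and q: "q = 1"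
    and m0: "emeasure \<nu> {0} > 0" and m1: "emeasure \<nu> {1} > 0"
  shows "\<not> spectral_measure mu"
proof
  assume "spectral_measure mu"
  then obtain \<Lambda> where onb: "exp_ONB mu \<Lambda>" by (auto simp: spectral_measure_def)
  obtain l0 where l0: "l0 \<in> \<Lambda>" using L_ne[OF onb] by auto
  interpret M: prob_space mu by (rule prob_mu)
  have rq: "real q = 1" using q by simp
  define h where "h c = of_real (p c) * expo l0 (real c)" for c
  define e1 where "e1 = expo l0 1"
  define G where "G x = (\<Sum>c\<in>C. indicator {real c} x *\<^sub>R h c - indicator {real c + 1} x *\<^sub>R (h c * e1))" for x
  define S where "S = real ` C \<union> (\<lambda>c. real c + 1) ` C"
  have fS: "finite S" using fin by (simp add: S_def)
  define F where "F x = G x / of_real (measure mu {x})" for x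
  have G0: "G x = 0" if "x \<notin> S" for x
    unfolding G_def using that by (intro sum.neutral) (auto simp: S_def indicator_def)
  have F0: "F x = 0" if "x \<notin> S" for x using G0[OF that] by (simp add: F_def)
  have epos: "emeasure mu {s} > 0" if s: "s \<in> S" for s
  proof -
    obtain c t where c: "c \<in> C" and t: "t = 0 \<or> t = 1" and st: "s = real c + t"
    proof -
      from s show ?thesis unfolding S_def
      proof (elim UnE imageE)
        fix c assume "c \<in> C" "s = real c" then show ?thesis using that[of c 0] by simp
      next
        fix c assume "c \<in> C" "s = real c + 1" then show ?thesis using that[of c 1] by simp
      qed
    qed
    have "(\<lambda>y. real q * real c + y) -` {s} = {t}" using st rq by auto
    then have "ennreal (p c) * emeasure \<nu> {t} = ennreal (p c) * emeasure \<nu> ((\<lambda>y. real q * real c + y) -` {s})"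
      by simp
    also have "\<dots> \<le> (\<Sum>c\<in>C. ennreal (p c) * emeasure \<nu> ((\<lambda>y. real q * real c + y) -` {s}))"
      by (rule member_le_sum[OF c _ fin]) auto
    also have "\<dots> = emeasure mu {s}" by (rule emeasure_mu[symmetric]) simp
    finally have le: "ennreal (p c) * emeasure \<nu> {t} \<le> emeasure mu {s}" .
    have "ennreal (p c) * emeasure \<nu> {t} > 0"
      using t m0 m1 ppos[OF c] by (auto simp: ennreal_zero_less_mult_iff)
    then show ?thesis using le by (meson less_le_trans)
  qed
  have mpos: "measure mu {s} > 0" if s: "s \<in> S" for s
    using epos[OF s] by (simp add: M.emeasure_eq_measure)
  have FL: "F \<in> L2 mu" by (rule finsupp_L2[OF fm_mu _ fS F0]) simp
  have "inner_L2 mu F (expo l) = 0" if l: "l \<in> \<Lambda>" for l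
  proof -
    define z where "z x = cnj (expo l x)" for x
    have "inner_L2 mu F (expo l) = (\<Sum>s\<in>S. measure mu {s} *\<^sub>R (F s * z s))"
      unfolding inner_L2_def z_def by (rule finsupp_integral[OF fm_mu _ fS]) (auto simp: F0)
    also have "\<dots> = (\<Sum>s\<in>S. G s * z s)"
    proof (intro sum.cong refl)
      fix s assume "s \<in> S"
      then have "measure mu {s} \<noteq> 0" using mpos by force
      then show "measure mu {s} *\<^sub>R (F s * z s) = G s * z s" by (simp add: F_def scaleR_conv_of_real)
    qed
    also have "\<dots> = (\<Sum>s\<in>S. \<Sum>c\<in>C. indicator {real c} s *\<^sub>R (h c * z s) - indicator {real c + 1} s *\<^sub>R (h c * e1 * z s))"
      unfolding G_def sum_distrib_right by (intro sum.cong refl) (simp add: left_diff_distrib mult.assoc)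
    also have "\<dots> = (\<Sum>c\<in>C. \<Sum>s\<in>S. indicator {real c} s *\<^sub>R (h c * z s) - indicator {real c + 1} s *\<^sub>R (h c * e1 * z s))"
      by (rule sum.swap)
    also have "\<dots> = (\<Sum>c\<in>C. h c * z (real c) - h c * e1 * z (real c + 1))"
    proof (intro sum.cong refl)
      fix c assume c: "c \<in> C"
      have i1: "real c \<in> S" "real c + 1 \<in> S" using c by (auto simp: S_def)
      show "(\<Sum>s\<in>S. indicator {real c} s *\<^sub>R (h c * z s) - indicator {real c + 1} s *\<^sub>R (h c * e1 * z s))
          = h c * z (real c) - h c * e1 * z (real c + 1)"
        by (simp add: sum_subtractf sum_indicator_pick[OF fS i1(1)] sum_indicator_pick[OF fS i1(2)])
    qed
    also have "\<dots> = Ef C p q (l0 - l) * (1 - expo (l0 - l) 1)"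
      unfolding Ef_def sum_distrib_right
    proof (intro sum.cong refl)
      fix c
      have "h c * z (real c) = of_real (p c) * expo (l0 - l) (real c)"
        by (simp add: h_def z_def mult.assoc expo_mult_cnj)
      moreover have "h c * e1 * z (real c + 1) = of_real (p c) * expo (l0 - l) (real c) * expo (l0 - l) 1"
        by (simp add: h_def z_def e1_def expo_add cnj_expo mult_ac flip: expo_add_freq)
      ultimately show "h c * z (real c) - h c * e1 * z (real c + 1) =
          of_real (p c) * expo (l0 - l) (real q * real c) * (1 - expo (l0 - l) 1)"
        using rq by (simp add: algebra_simps)
    qed
    also have "\<dots> = 0"
    proof (cases "rel l0 l")
      case True
      then have "(l0 - l) * 1 \<in> \<int>" using rq by (simp add: rel_def)
      then have "expo (l0 - l) 1 = 1" by (rule expo_int)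
      then show ?thesis by simp
    next
      case False
      then have "Ef C p q (l0 - l) = 0" by (rule diff_class[OF zero onb l0 l])
      then show ?thesis by simp
    qed
    finally show ?thesis .
  qed
  then have aeF: "AE x in mu. F x = 0" using onb FL by (auto simp: exp_ONB_def)
  define c0 where "c0 = Min C"
  have c0: "c0 \<in> C" using fin C_ne by (simp add: c0_def)
  have c0S: "real c0 \<in> S" using c0 by (auto simp: S_def)
  have "F (real c0) = 0" using AE_atom[OF aeF epos[OF c0S]] by simp
  moreover have "G (real c0) = h c0"
  proof -
    have "G (real c0) = (\<Sum>c\<in>C. if c = c0 then h c else 0)"
      unfolding G_def
    proof (intro sum.cong refl)
      fix c assume c: "c \<in> C"
      have "c0 \<le> c" using fin c by (simp add: c0_def)
      then have "real c0 \<noteq> real c + 1" by linarith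
      then show "indicator {real c} (real c0) *\<^sub>R h c - indicator {real c + 1} (real c0) *\<^sub>R (h c * e1)
          = (if c = c0 then h c else 0)"
        by (auto simp: indicator_def)
    qed
    also have "\<dots> = h c0" using c0 fin by simp
    finally show ?thesis .
  qed
  moreover have "h c0 \<noteq> 0" using ppos[OF c0] by (simp add: h_def)
  ultimately show False using mpos[OF c0S] by (simp add: F_def)
qed

end


context cset
begin

lemma gap:
  assumes "c < c'" shows "real q * real c + real q \<le> real q * real c'"
proof -
  have "real c + 1 \<le> real c'" using assms by linarith
  then have "real q * (real c + 1) \<le> real q * real c'" by (intro mult_left_mono) auto
  then show ?thesis by (simp add: algebra_simps)
qed

lemma AE_not_point:
  assumes "emeasure \<nu> {t} = 0" shows "AE y in \<nu>. y \<noteq> t"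
proof (rule AE_I')
  show "{t} \<in> null_sets \<nu>" using assms by (simp add: null_sets_def sets_nu)
qed auto

lemma J_exists:
  assumes supp: "measure_support \<nu> \<subseteq> {0..1}"
    and nd: "\<not> (q = 1 \<and> emeasure \<nu> {0} > 0 \<and> emeasure \<nu> {1} > 0)"
  shows "\<exists>J. (\<forall>c\<in>C. J c \<in> sets borel) \<and> (\<forall>c\<in>C. \<forall>c'\<in>C. c \<noteq> c' \<longrightarrow> J c \<inter> J c' = {})
      \<and> (\<forall>c\<in>C. AE y in \<nu>. real q * real c + y \<in> J c)"
proof -
  have s01: "AE y in \<nu>. y \<in> {0..1}" by (rule AE_support[OF supp])
  have qge: "real q \<ge> 1" using q1 by simp
  have cases: "emeasure \<nu> {1} = 0 \<or> emeasure \<nu> {0} = 0 \<or> q \<ge> 2"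
    using nd q1 by (auto simp: not_gr_zero)
  then consider (A) "emeasure \<nu> {1} = 0" | (B) "emeasure \<nu> {0} = 0" | (Q) "q \<ge> 2" by blast
  then show ?thesis
  proof cases
    case A
    define J where "J c = {real q * real c ..< real q * real c + 1}" for c
    have d: "J c \<inter> J c' = {}" if "c \<noteq> c'" for c c'
    proof (rule ccontr)
      assume "J c \<inter> J c' \<noteq> {}"
      then obtain x where x: "x \<in> J c" "x \<in> J c'" by auto
      show False
      proof (cases "c < c'")
        case True with gap[OF True] x qge show False by (auto simp: J_def)
      next
        case False
        then have "c' < c" using that by simp
        with gap[OF this] x qge show False by (auto simp: J_def)
      qed
    qed
    have "AE y in \<nu>. real q * real c + y \<in> J c" for c
      using s01 AE_not_point[OF A] by eventually_elim (auto simp: J_def)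
    with d show ?thesis by (intro exI[of _ J]) (auto simp: J_def)
  next
    case B
    define J where "J c = {real q * real c <.. real q * real c + 1}" for c
    have d: "J c \<inter> J c' = {}" if "c \<noteq> c'" for c c'
    proof (rule ccontr)
      assume "J c \<inter> J c' \<noteq> {}"
      then obtain x where x: "x \<in> J c" "x \<in> J c'" by auto
      show False
      proof (cases "c < c'")
        case True with gap[OF True] x qge show False by (auto simp: J_def)
      next
        case False
        then have "c' < c" using that by simp
        with gap[OF this] x qge show False by (auto simp: J_def)
      qed
    qed
    have "AE y in \<nu>. real q * real c + y \<in> J c" for c
      using s01 AE_not_point[OF B] by eventually_elim (auto simp: J_def)
    with d show ?thesis by (intro exI[of _ J]) (auto simp: J_def)
  next
    case Q
    have qge2: "real q \<ge> 2" using Q by simp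
    define J where "J c = {real q * real c .. real q * real c + 1}" for c
    have d: "J c \<inter> J c' = {}" if "c \<noteq> c'" for c c'
    proof (rule ccontr)
      assume "J c \<inter> J c' \<noteq> {}"
      then obtain x where x: "x \<in> J c" "x \<in> J c'" by auto
      show False
      proof (cases "c < c'")
        case True with gap[OF True] x qge2 show False by (auto simp: J_def)
      next
        case False
        then have "c' < c" using that by simp
        with gap[OF this] x qge2 show False by (auto simp: J_def)
      qed
    qed
    have "AE y in \<nu>. real q * real c + y \<in> J c" for c
      using s01 by eventually_elim (auto simp: J_def)
    with d show ?thesis by (intro exI[of _ J]) (auto simp: J_def)
  qed
qed

lemma main:
  assumes supp: "measure_support \<nu> \<subseteq> {0..1}"
    and zero: "\<forall>\<xi>\<in>zero_set \<nu>. real q * \<xi> \<in> \<int>"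
  shows "spectral_measure mu \<longleftrightarrow> spectral_measure eta \<and> spectral_measure \<nu>"
proof
  assume sm: "spectral_measure mu"
  then obtain \<Lambda> where cL: "countable \<Lambda>" and onb: "exp_ONB mu \<Lambda>" by (auto simp: spectral_measure_def)
  show "spectral_measure eta \<and> spectral_measure \<nu>"
  proof (cases "q = 1 \<and> emeasure \<nu> {0} > 0 \<and> emeasure \<nu> {1} > 0")
    case True
    then show ?thesis using caseD_mu[OF zero] sm by blast
  next
    case False
    obtain J where J: "\<forall>c\<in>C. J c \<in> sets borel" and disj: "\<forall>c\<in>C. \<forall>c'\<in>C. c \<noteq> c' \<longrightarrow> J c \<inter> J c' = {}"
      and ae: "\<forall>c\<in>C. AE y in \<nu>. real q * real c + y \<in> J c"
      using J_exists[OF supp False] by blast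
    have "spectral_measure eta"
      by (rule eta_spectral_from[where J=J, OF zero _ _ _ cL onb]) (use J disj ae in auto)
    moreover have "spectral_measure \<nu>"
      by (rule nu_spectral_from[where J=J, OF zero _ _ _ cL onb]) (use J disj ae in auto)
    ultimately show ?thesis by blast
  qed
next
  assume "spectral_measure eta \<and> spectral_measure \<nu>"
  then show "spectral_measure mu" using backward[OF zero] by blast
qed

end

theorem theorem5p3:
  fixes \<nu> :: "real measure" and q :: nat and C :: "nat set" and p :: "nat \<Rightarrow> real"
  assumes "sets \<nu> = sets borel" and "prob_space \<nu>"
    and "measure_support \<nu> \<subseteq> {0..1}"
    and "R_spectral_measure \<nu>"
    and "q \<ge> 1"
    and "\<forall>\<xi>\<in>zero_set \<nu>. real q * \<xi> \<in> \<int>"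
    and "finite C"
    and "\<forall>c\<in>C. p c > 0" and "(\<Sum>c\<in>C. p c) = 1"
  shows "spectral_measure (convolution (disc_measure C p (\<lambda>c. real (q * c))) \<nu>)
     \<longleftrightarrow> spectral_measure (disc_measure C p real) \<and> spectral_measure \<nu>"
proof -
  have cs: "cset \<nu> q C p"
  proof (rule cset.intro)
    show "sets \<nu> = sets borel" by (rule assms(1))
    show "prob_space \<nu>" by (rule assms(2))
    show "finite C" by (rule assms(7))
    show "\<And>c. c \<in> C \<Longrightarrow> 0 < p c" using assms(8) by blast
    show "(\<Sum>c\<in>C. p c) = 1" by (rule assms(9))
    show "1 \<le> q" by (rule assms(5))
  qed
  have e: "(\<lambda>c. real (q * c)) = (\<lambda>c. real q * real c)" by (rule ext) simp
  show ?thesis unfolding e by (rule cset.main[OF cs assms(3) assms(6)])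
qed


end
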